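(* Let $\Delta\ge3$ and $n\ge 3\Delta+4$ be odd integers. Then ${\rm EX}^{\infty}(\mathcal G_{\Delta,n})=\mathcal V_{\Delta+1,n}$.
   Context: A walk of length $\ell\ge1$ in a graph $G$ is a sequence of vertices $v_0,v_1,\dots,v_\ell$ with $v_i v_{i+1}$ an edge for $0\le i\le\ell-1$; its starting vertex is $v_0$. Let $w^\ell_G(u)$ be the number of walks of length $\ell$ starting at $u$, and let $W^\ell(G)=\sum_{u\in V(G)}w^\ell_G(u)$. For a family $\mathcal G$ of graphs, define: \begin{itemize} \item ${\rm EX}^1(\mathcal G)=\{G\in\mathcal G: W^1(G)\ge W^1(G')\ \text{for all } G'\in\mathcal G\}$; \item for $\ell\ge2$, ${\rm EX}^\ell(\mathcal G)=\{G\in{\rm EX}^{\ell-1}(\mathcal G): W^\ell(G)\ge W^\ell(G')\ \text{for all } G'\in{\rm EX}^{\ell-1}(\mathcal G)\}$; \item ${\rm EX}^\infty(\mathcal G)=\bigcap_{\ell\ge1}{\rm EX}^\ell(\mathcal G)$. \end{itemize} For odd $\Delta\ge3$ and $n\ge3\Delta+4$, $\mathcal G_{\Delta,n}$ is the set of graphs on $n$ vertices in which every vertex has degree $\Delta$ except exactly one vertex of degree $\Delta-1$, and every connected component has at most $2\Delta$ vertices. $M_m$ denotes a perfect matching on $m$ vertices and $\overline{M_m}$ its complement. $G_1\vee G_2\vee G_3$ is obtained from disjoint $G_1,G_2,G_3$ by joining every vertex of $G_1$ to every vertex of $G_2$ and every vertex of $G_2$ to every vertex of $G_3$; there are no edges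 between $G_1$ and $G_3$. A graph is nearly $(k-1)$-regular if all vertices have degree $k-1$ except exactly one vertex, which has degree $k-2$. For even $k\ge4$ and odd $m\ge k+1$, $\mathcal V_{k,m}$ is the family of nearly $(k-1)$-regular graphs on $m$ vertices in which one component is isomorphic to $K_1\vee\overline{M_{k-2}}\vee K_2$ and every other component has at most $2k-2$ vertices. *)

theory Defs
  imports Main
begin

type_synonym graph = "nat \<Rightarrow> nat \<Rightarrow> bool"

definition is_graph :: "nat \<Rightarrow> graph \<Rightarrow> bool" where
  "is_graph n E \<longleftrightarrow> (\<forall>u v. E u v \<longrightarrow> u < n \<and> v < n \<and> u \<noteq> v \<and> E v u)"

definition deg :: "nat \<Rightarrow> graph \<Rightarrow> nat \<Rightarrow> nat" where
  "deg n E v = card {u. u < n \<and> E v u}"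

definition walks_from :: "nat \<Rightarrow> graph \<Rightarrow> nat \<Rightarrow> nat \<Rightarrow> nat list set" where
  "walks_from n E l u = {xs. length xs = Suc l \<and> xs ! 0 = u \<and> set xs \<subseteq> {..<n}
      \<and> (\<forall>i<l. E (xs ! i) (xs ! Suc i))}"

definition walk_count :: "nat \<Rightarrow> graph \<Rightarrow> nat \<Rightarrow> nat \<Rightarrow> nat" where
  "walk_count n E l u = card (walks_from n E l u)"

definition W :: "nat \<Rightarrow> nat \<Rightarrow> graph \<Rightarrow> nat" where
  "W n l E = (\<Sum>u<n. walk_count n E l u)"

text \<open>EX_ex n 0 F = F; EX_ex n l F = EX^l(F) for l >= 1.\<close>
fun EX_ex :: "nat \<Rightarrow> nat \<Rightarrow> graph set \<Rightarrow> graph set" where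
  "EX_ex n 0 F = F"
| "EX_ex n (Suc l) F =
     {G \<in> EX_ex n l F. \<forall>G' \<in> EX_ex n l F. W n (Suc l) G' \<le> W n (Suc l) G}"

definition EX_inf :: "nat \<Rightarrow> graph set \<Rightarrow> graph set" where
  "EX_inf n F = (\<Inter>l\<in>{1..}. EX_ex n l F)"

definition comp :: "graph \<Rightarrow> nat \<Rightarrow> nat set" where
  "comp E v = {u. E\<^sup>*\<^sup>* v u}"

text \<open>Nearly d-regular (with d = k-1): all degrees d except exactly one of degree d-1.\<close>
definition nearly_regular :: "nat \<Rightarrow> nat \<Rightarrow> graph \<Rightarrow> bool" where
  "nearly_regular n d E \<longleftrightarrow>
     (\<forall>v<n. deg n E v = d \<or> deg n E v = d - 1) \<and> (\<exists>!v. v < n \<and> deg n E v = d - 1)"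

definition GDn :: "nat \<Rightarrow> nat \<Rightarrow> graph set" where
  "GDn \<Delta> n = {E. is_graph n E \<and> nearly_regular n \<Delta> E
                 \<and> (\<forall>v<n. card (comp E v) \<le> 2 * \<Delta>)}"

text \<open>The graph K_1 \/ co-M_{k-2} \/ K_2 on vertices {0..k}: vertex 0 is K_1,
  vertices 1..k-2 carry the complement of the perfect matching {1,2},{3,4},...,
  vertices k-1, k form K_2.\<close>
definition Hk :: "nat \<Rightarrow> graph" where
  "Hk k u v \<longleftrightarrow> u \<le> k \<and> v \<le> k \<and> u \<noteq> v \<and>
     (let mid = (\<lambda>x. 1 \<le> x \<and> x \<le> k - 2); top = (\<lambda>x. k - 1 \<le> x \<and> x \<le> k) in
       (u = 0 \<and> mid v) \<or> (mid u \<and> v = 0)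
     \<or> (mid u \<and> mid v \<and> (u - 1) div 2 \<noteq> (v - 1) div 2)
     \<or> (mid u \<and> top v) \<or> (top u \<and> mid v)
     \<or> (top u \<and> top v))"

definition comp_iso :: "graph \<Rightarrow> nat set \<Rightarrow> graph \<Rightarrow> nat \<Rightarrow> bool" where
  "comp_iso E C H N \<longleftrightarrow> (\<exists>f. bij_betw f C {0..<N} \<and>
      (\<forall>u\<in>C. \<forall>v\<in>C. E u v \<longleftrightarrow> H (f u) (f v)))"

definition Vfam :: "nat \<Rightarrow> nat \<Rightarrow> graph set" where
  "Vfam k m = {E. is_graph m E \<and> nearly_regular m (k - 1) E \<and>
     (\<exists>v<m. comp_iso E (comp E v) (Hk k) (Suc k) \<and>
        (\<forall>u<m. comp E u \<noteq> comp E v \<longrightarrow> card (comp E u) \<le> 2 * k - 2))}"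

end

theory Submission
  imports Defs
begin

definition nb :: "nat \<Rightarrow> graph \<Rightarrow> nat \<Rightarrow> nat set" where
  "nb n E u = {v. v < n \<and> E u v}"

lemma finite_nb[simp]: "finite (nb n E u)" unfolding nb_def by auto

lemma deg_nb: "deg n E v = card (nb n E v)" unfolding deg_def nb_def by simp

lemma finite_walks: "finite (walks_from n E l u)"
proof -
  have "walks_from n E l u \<subseteq> {xs. set xs \<subseteq> {..<n} \<and> length xs = Suc l}"
    unfolding walks_from_def by auto
  moreover have "finite {xs. set xs \<subseteq> {..<n} \<and> length xs = Suc l}"
    by (rule finite_lists_length_eq) simp
  ultimately show ?thesis by (rule finite_subset)
qed

lemma walks_0: "u < n \<Longrightarrow> walks_from n E 0 u = {[u]}"
  unfolding walks_from_def
  by (auto simp: length_Suc_conv)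

lemma walks_ge: "\<not> u < n \<Longrightarrow> walks_from n E l u = {}"
  unfolding walks_from_def
  by (auto simp: length_Suc_conv)

lemma walks_Suc: assumes True: "u < n" shows
  "walks_from n E (Suc l) u = (\<Union>v\<in>nb n E u. (#) u ` walks_from n E l v)"
proof -
  show ?thesis
  proof (rule set_eqI, rule iffI)
    fix xs assume xs: "xs \<in> walks_from n E (Suc l) u"
    then obtain ys where ys: "xs = u # ys" "length ys = Suc l"
      unfolding walks_from_def by (cases xs) auto
    have e: "\<And>i. i < Suc l \<Longrightarrow> E (xs ! i) (xs ! Suc i)" using xs unfolding walks_from_def by auto
    have "E u (ys ! 0)" using e[of 0] ys by simp
    moreover have "ys ! 0 < n"
    proof -
      have "set ys \<subseteq> {..<n}" using xs ys unfolding walks_from_def by auto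
      moreover have "ys ! 0 \<in> set ys" using ys(2) by (intro nth_mem) simp
      ultimately show ?thesis by auto
    qed
    moreover have "ys \<in> walks_from n E l (ys ! 0)"
      unfolding walks_from_def using xs ys e[of "Suc _"] by (auto simp: walks_from_def)
    ultimately show "xs \<in> (\<Union>v\<in>nb n E u. (#) u ` walks_from n E l v)"
      using ys unfolding nb_def by blast
  next
    fix xs assume "xs \<in> (\<Union>v\<in>nb n E u. (#) u ` walks_from n E l v)"
    then obtain v ys where v: "v < n" "E u v" and ys: "ys \<in> walks_from n E l v" and xs: "xs = u # ys"
      unfolding nb_def by auto
    have "\<forall>i<Suc l. E (xs ! i) (xs ! Suc i)"
    proof (intro allI impI)
      fix i assume "i < Suc l"
      then show "E (xs ! i) (xs ! Suc i)"
        using ys v xs unfolding walks_from_def by (cases i) auto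
    qed
    then show "xs \<in> walks_from n E (Suc l) u" using ys xs True unfolding walks_from_def by auto
  qed
qed

lemma wc_0: "u < n \<Longrightarrow> walk_count n E 0 u = 1"
  unfolding walk_count_def by (simp add: walks_0)

lemma wc_Suc: "u < n \<Longrightarrow> walk_count n E (Suc l) u = (\<Sum>v\<in>nb n E u. walk_count n E l v)"
proof -
  assume u: "u < n"
  have "card (\<Union>v\<in>nb n E u. (#) u ` walks_from n E l v) = (\<Sum>v\<in>nb n E u. card ((#) u ` walks_from n E l v))"
  proof (rule card_UN_disjoint)
    show "\<forall>i\<in>nb n E u. \<forall>j\<in>nb n E u. i \<noteq> j \<longrightarrow> (#) u ` walks_from n E l i \<inter> (#) u ` walks_from n E l j = {}"
      unfolding walks_from_def by auto
  qed (auto simp: finite_walks)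
  also have "\<dots> = (\<Sum>v\<in>nb n E u. walk_count n E l v)"
    by (simp add: card_image walk_count_def)
  finally show ?thesis unfolding walk_count_def using walks_Suc[OF u] by simp
qed


fun P :: "nat \<Rightarrow> graph \<Rightarrow> nat \<Rightarrow> nat \<Rightarrow> nat \<Rightarrow> nat" where
  "P n E 0 u v = (if u = v then 1 else 0)"
| "P n E (Suc l) u v = (\<Sum>x\<in>nb n E u. P n E l x v)"

lemma graph_sym: "is_graph n E \<Longrightarrow> E u v \<Longrightarrow> E v u"
  unfolding is_graph_def by blast
lemma graph_irr: "is_graph n E \<Longrightarrow> \<not> E u u"
  unfolding is_graph_def by blast
lemma graph_lt: "is_graph n E \<Longrightarrow> E u v \<Longrightarrow> u < n \<and> v < n"
  unfolding is_graph_def by blast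

lemma sum_swap_nb:
  assumes g: "is_graph n E" and A: "A \<subseteq> {..<n}"
  shows "(\<Sum>x\<in>A. \<Sum>y\<in>nb n E x. f y) = (\<Sum>y<n. card {x\<in>A. E y x} * f y)"
proof -
  have fA: "finite A" using A finite_subset by blast
  have "(\<Sum>x\<in>A. \<Sum>y\<in>nb n E x. f y) = (\<Sum>x\<in>A. \<Sum>y<n. if E x y then f y else 0)"
    by (rule sum.cong[OF refl]) (simp add: nb_def sum.If_cases Int_def lessThan_def conj_commute)
  also have "\<dots> = (\<Sum>y<n. \<Sum>x\<in>A. if E x y then f y else 0)"
    by (rule sum.swap)
  also have "\<dots> = (\<Sum>y<n. card {x\<in>A. E y x} * f y)"
  proof (rule sum.cong[OF refl])
    fix y assume "y \<in> {..<n}"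
    have "(\<Sum>x\<in>A. if E x y then f y else 0) = (\<Sum>x\<in>{x\<in>A. E x y}. f y)"
      using fA by (simp add: sum.If_cases Int_def)
    also have "{x\<in>A. E x y} = {x\<in>A. E y x}" using graph_sym[OF g] by blast
    finally show "(\<Sum>x\<in>A. if E x y then f y else 0) = card {x\<in>A. E y x} * f y" by simp
  qed
  finally show ?thesis .
qed

locale ng =
  fixes n :: nat and E :: graph and D :: nat and w :: nat
  assumes g: "is_graph n E" and wn: "w < n" and D1: "D \<ge> 1"
    and degw: "deg n E w = D - 1" and dego: "\<And>v. v < n \<Longrightarrow> v \<noteq> w \<Longrightarrow> deg n E v = D"
begin

lemma deg_plus: "v < n \<Longrightarrow> card (nb n E v) + (if v = w then 1 else 0) = D"
  using degw dego D1 deg_nb by (cases "v = w") auto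

lemma nb_sub: "nb n E u \<subseteq> {..<n}" unfolding nb_def by auto

lemma Q: "u < n \<Longrightarrow> walk_count n E (Suc l) u + P n E l u w = D * walk_count n E l u"
proof (induction l arbitrary: u)
  case 0
  then show ?case using deg_plus[of u] by (simp add: wc_Suc wc_0 nb_def)
next
  case (Suc l)
  have "walk_count n E (Suc (Suc l)) u + P n E (Suc l) u w
      = (\<Sum>v\<in>nb n E u. walk_count n E (Suc l) v + P n E l v w)"
    using Suc.prems by (simp add: wc_Suc[of u] sum.distrib)
  also have "\<dots> = (\<Sum>v\<in>nb n E u. D * walk_count n E l v)"
    by (rule sum.cong[OF refl]) (use Suc.IH nb_def in auto)
  also have "\<dots> = D * walk_count n E (Suc l) u"
    using Suc.prems by (simp add: wc_Suc sum_distrib_left)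
  finally show ?case .
qed

lemma Wrec: "W n (Suc l) E + walk_count n E l w = D * W n l E"
proof -
  have "W n (Suc l) E = (\<Sum>u<n. \<Sum>v\<in>nb n E u. walk_count n E l v)"
    unfolding W_def by (rule sum.cong) (auto simp: wc_Suc)
  also have "\<dots> = (\<Sum>y<n. card {x\<in>{..<n}. E y x} * walk_count n E l y)"
    by (rule sum_swap_nb[OF g]) auto
  also have "\<dots> = (\<Sum>y<n. card (nb n E y) * walk_count n E l y)"
    by (simp add: nb_def)
  finally have 1: "W n (Suc l) E = (\<Sum>y<n. card (nb n E y) * walk_count n E l y)" .
  have "(\<Sum>y<n. card (nb n E y) * walk_count n E l y) + walk_count n E l w
      = (\<Sum>y<n. (card (nb n E y) + (if y = w then 1 else 0)) * walk_count n E l y)"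
  proof -
    have "(\<Sum>y<n. (card (nb n E y) + (if y = w then 1 else 0)) * walk_count n E l y)
       = (\<Sum>y<n. card (nb n E y) * walk_count n E l y + (if y = w then walk_count n E l y else 0))"
      by (rule sum.cong) (auto simp: algebra_simps)
    also have "\<dots> = (\<Sum>y<n. card (nb n E y) * walk_count n E l y) + walk_count n E l w"
      using wn by (simp add: sum.distrib)
    finally show ?thesis by simp
  qed
  also have "\<dots> = (\<Sum>y<n. D * walk_count n E l y)"
    by (rule sum.cong) (auto simp: deg_plus)
  finally show ?thesis using 1 by (simp add: W_def sum_distrib_left)
qed

end

lemma comp_self: "u \<in> comp E u" unfolding comp_def by simp
lemma comp_closed: "v \<in> comp E u \<Longrightarrow> E v x \<Longrightarrow> x \<in> comp E u"
  unfolding comp_def by (auto intro: rtranclp.rtrancl_into_rtrancl)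
lemma comp_lt: assumes "is_graph n E" "u < n" shows "comp E u \<subseteq> {..<n}"
proof
  fix x assume "x \<in> comp E u"
  then have "E\<^sup>*\<^sup>* u x" unfolding comp_def by simp
  then show "x \<in> {..<n}"
    by (induction rule: rtranclp_induct) (use assms graph_lt in auto)
qed

lemma double_count:
  assumes g: "is_graph n E" and A: "A \<subseteq> {..<n}" and B: "B \<subseteq> {..<n}"
  shows "(\<Sum>a\<in>A. card (nb n E a \<inter> B)) = (\<Sum>b\<in>B. card (nb n E b \<inter> A))"
proof -
  have fA: "finite A" and fB: "finite B" using A B finite_subset by blast+
  have 1: "\<And>a A B. finite B \<Longrightarrow> B \<subseteq> {..<n} \<Longrightarrow> card (nb n E a \<inter> B) = (\<Sum>b\<in>B. if E a b then 1 else 0)"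
  proof -
    fix a and A B :: "nat set" assume "finite B" "B \<subseteq> {..<n}"
    then have "nb n E a \<inter> B = {b\<in>B. E a b}" unfolding nb_def by auto
    then show "card (nb n E a \<inter> B) = (\<Sum>b\<in>B. if E a b then 1 else 0)"
      using \<open>finite B\<close> by (simp add: sum.If_cases Int_def)
  qed
  have "(\<Sum>a\<in>A. card (nb n E a \<inter> B)) = (\<Sum>a\<in>A. \<Sum>b\<in>B. if E a b then 1 else 0)"
    using 1[OF fB B] by simp
  also have "\<dots> = (\<Sum>b\<in>B. \<Sum>a\<in>A. if E a b then 1 else 0)" by (rule sum.swap)
  also have "\<dots> = (\<Sum>b\<in>B. \<Sum>a\<in>A. if E b a then 1 else 0)"
  proof (intro sum.cong refl)
    fix a b assume "b \<in> B" "a \<in> A"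
    have "E a b = E b a" using graph_sym[OF g] by blast
    then show "(if E a b then 1 else 0) = (if E b a then 1 else (0::nat))" by simp
  qed
  also have "\<dots> = (\<Sum>b\<in>B. card (nb n E b \<inter> A))" using 1[OF fA A] by simp
  finally show ?thesis .
qed

lemma even_count:
  assumes g: "is_graph n E" and A: "A \<subseteq> {..<n}"
  shows "even (\<Sum>a\<in>A. card (nb n E a \<inter> A))"
proof -
  have "finite A" using A finite_subset by blast
  then show ?thesis using A
  proof (induction A rule: finite_induct)
    case empty then show ?case by simp
  next
    case (insert a A)
    have aA: "a \<notin> A" by fact
    have s1: "\<And>x. x \<in> A \<Longrightarrow> card (nb n E x \<inter> insert a A) = card (nb n E x \<inter> A) + (if E x a then 1 else 0)"
    proof -
      fix x assume "x \<in> A"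
      show "card (nb n E x \<inter> insert a A) = card (nb n E x \<inter> A) + (if E x a then 1 else 0)"
      proof (cases "E x a")
        case True
        then have "nb n E x \<inter> insert a A = insert a (nb n E x \<inter> A)" using insert.prems unfolding nb_def by auto
        then show ?thesis using True aA insert.hyps by simp
      next
        case False
        then have "nb n E x \<inter> insert a A = nb n E x \<inter> A" unfolding nb_def by auto
        then show ?thesis using False by simp
      qed
    qed
    have s2: "card (nb n E a \<inter> insert a A) = card (nb n E a \<inter> A)"
      using graph_irr[OF g, of a] unfolding nb_def by (metis Int_insert_right mem_Collect_eq)
    have s3: "(\<Sum>x\<in>A. if E x a then 1 else 0) = card (nb n E a \<inter> A)"
    proof -
      have "nb n E a \<inter> A = {x\<in>A. E x a}" using insert.prems graph_sym[OF g] unfolding nb_def by auto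
      then show ?thesis using insert.hyps by (simp add: sum.If_cases Int_def)
    qed
    have "(\<Sum>x\<in>insert a A. card (nb n E x \<inter> insert a A))
        = card (nb n E a \<inter> A) + (\<Sum>x\<in>A. card (nb n E x \<inter> A) + (if E x a then 1 else 0))"
      using insert.hyps s1 s2 by simp
    also have "\<dots> = (\<Sum>x\<in>A. card (nb n E x \<inter> A)) + 2 * card (nb n E a \<inter> A)"
      using s3 by (simp add: sum.distrib)
    finally show ?case using insert.IH insert.prems by simp
  qed
qed

lemma all_eq_from_sum:
  fixes f :: "'a \<Rightarrow> nat"
  assumes "finite A" "\<And>a. a \<in> A \<Longrightarrow> f a \<le> K" "sum f A = K * card A"
  shows "\<And>a. a \<in> A \<Longrightarrow> f a = K"
proof (rule ccontr)
  fix a assume a: "a \<in> A" "f a \<noteq> K"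
  then have "f a < K" using assms(2) le_neq_implies_less by blast
  then have "sum f A < sum (\<lambda>_. K) A"
    using assms(1,2) a(1) by (intro sum_strict_mono_ex1) auto
  then show False using assms(3) by simp
qed

lemma arith_main:
  fixes D s t SN SX :: nat
  assumes "odd D" "D \<ge> 3" "SN + t = (D-1)*(D-1)" "SX + t = D * s" "SX \<le> s * (s - 1)"
    "even SN" "even SX" "t \<ge> D - 1" "s \<le> D"
  shows "t \<ge> 2 * (D - 1)" and "t = 2 * (D - 1) \<Longrightarrow> (s = 2 \<or> s = D - 1) \<and> SX = s * (s - 1)"
proof -
  obtain e0 where e0: "D = 2 * e0 + 1" using assms(1) oddE by blast
  define e where "e = e0 - 1"
  have e: "D = 2 * e + 3" using e0 assms(2) unfolding e_def by simp
  have "even ((D-1)*(D-1))" using e by simp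
  then have te: "even t" using assms(3,6) by (metis even_add)
  have "even (D * s)" using assms(4,7) te by (metis even_add)
  then have se: "even s" using assms(1) by simp
  have s0: "s \<noteq> 0"
  proof
    assume "s = 0" then have "t = 0" using assms(4) by simp
    then show False using assms(8) e by simp
  qed
  have "s \<ge> 2" using se s0 by presburger
  then obtain a where a: "s = 2 + a" using le_Suc_ex by blast
  have "s \<noteq> D" using se assms(1) by auto
  then have "s \<le> D - 1" using assms(9) by simp
  then obtain b where b: "D - 1 = s + b" using le_Suc_ex by blast
  have D: "D = 3 + a + b" using a b e by simp
  have key: "t + SX = D * s" using assms(4) by simp
  have "SX \<le> (2 + a) * (1 + a)" using assms(5) a by simp
  have "t \<ge> D * s - (2 + a) * (1 + a)" using key \<open>SX \<le> (2 + a) * (1 + a)\<close> by linarith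
  moreover have "D * s - (2 + a) * (1 + a) = 2 * (D - 1) + a * b"
    unfolding D a by (simp add: algebra_simps)
  ultimately have main: "t \<ge> 2 * (D - 1) + a * b" by simp
  then show "t \<ge> 2 * (D - 1)" by simp
  assume t: "t = 2 * (D - 1)"
  then have "a * b = 0" using main by simp
  then have ab: "a = 0 \<or> b = 0" by simp
  then show "(s = 2 \<or> s = D - 1) \<and> SX = s * (s - 1)"
  proof
    assume "a = 0"
    then show ?thesis using a D t key by (simp add: algebra_simps)
  next
    assume "b = 0"
    then show ?thesis using a D t key by (simp add: algebra_simps)
  qed
qed


locale ng2 = ng +
  assumes Dodd: "odd D" and D3: "D \<ge> 3" and compsz: "card (comp E w) \<le> 2 * D"
begin

definition "NN = nb n E w"
definition "CC = comp E w"
definition "XX = CC - insert w NN"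
definition "mm y = card (nb n E y \<inter> NN)"
definition "C4 = (D-1)*(D-1) + (D-1)*((D-3)*(D-3)) + 2*((D-1)*(D-1))"

lemma C_lt: "CC \<subseteq> {..<n}" unfolding CC_def using comp_lt[OF g wn] .
lemma finC: "finite CC" using C_lt finite_subset by blast
lemma w_C: "w \<in> CC" unfolding CC_def by (rule comp_self)
lemma nb_C: "u \<in> CC \<Longrightarrow> nb n E u \<subseteq> CC" unfolding CC_def nb_def using comp_closed by blast
lemma N_C: "NN \<subseteq> CC" unfolding NN_def using nb_C[OF w_C] .
lemma w_N: "w \<notin> NN" unfolding NN_def nb_def using graph_irr[OF g] by blast
lemma card_N: "card NN = D - 1" unfolding NN_def using degw deg_nb by simp
lemma N_lt: "NN \<subseteq> {..<n}" using N_C C_lt by blast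
lemma X_lt: "XX \<subseteq> {..<n}" using C_lt unfolding XX_def by blast
lemma finN: "finite NN" and finX: "finite XX" using N_lt X_lt finite_subset by blast+
lemma C_dec: "CC = insert w (NN \<union> XX)" using w_C N_C unfolding XX_def by blast
lemma NX: "NN \<inter> XX = {}" and wX: "w \<notin> XX" unfolding XX_def by blast+
lemma card_C: "card CC = D + card XX"
proof -
  have "card CC = Suc (card (NN \<union> XX))" using C_dec finN finX w_N wX by simp
  also have "\<dots> = Suc (card NN + card XX)" using NX finN finX by (simp add: card_Un_disjoint)
  finally show ?thesis using card_N D3 by simp
qed
lemma s_le: "card XX \<le> D" using card_C compsz unfolding CC_def by simp

lemma card_ins_un: "finite A \<Longrightarrow> finite B \<Longrightarrow> A \<inter> B = {} \<Longrightarrow> a \<notin> A \<Longrightarrow> a \<notin> B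
   \<Longrightarrow> card (insert a (A \<union> B)) = Suc (card A + card B)"
  by (simp add: card_Un_disjoint)

lemma inN: "y < n \<Longrightarrow> y \<in> NN \<longleftrightarrow> E y w"
  unfolding NN_def nb_def using graph_sym[OF g] wn by blast

lemma nbN: "u \<in> NN \<Longrightarrow> nb n E u = insert w ((nb n E u \<inter> NN) \<union> (nb n E u \<inter> XX))"
proof -
  assume u: "u \<in> NN"
  have "nb n E u \<subseteq> CC" using nb_C N_C u by blast
  moreover have "w \<in> nb n E u" using u inN N_lt wn unfolding nb_def by auto
  ultimately show ?thesis using C_dec by blast
qed

lemma degN: "u \<in> NN \<Longrightarrow> 1 + mm u + card (nb n E u \<inter> XX) = D"
proof -
  assume u: "u \<in> NN"
  have "u \<noteq> w" using u w_N by blast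
  then have "card (nb n E u) = D" using dego[of u] u N_lt deg_nb by auto
  moreover have "card (nb n E u) = Suc (card (nb n E u \<inter> NN) + card (nb n E u \<inter> XX))"
  proof -
    have "card (nb n E u) = card (insert w ((nb n E u \<inter> NN) \<union> (nb n E u \<inter> XX)))"
      using arg_cong[of _ _ card, OF nbN[OF u]] .
    also have "\<dots> = Suc (card (nb n E u \<inter> NN) + card (nb n E u \<inter> XX))"
      by (rule card_ins_un) (use w_N wX NX in auto)
    finally show ?thesis .
  qed
  ultimately show ?thesis unfolding mm_def by simp
qed

lemma degX: "x \<in> XX \<Longrightarrow> mm x + card (nb n E x \<inter> XX) = D"
proof -
  assume x: "x \<in> XX"
  have xn: "x < n" "x \<noteq> w" using x X_lt wX by auto
  then have "card (nb n E x) = D" using dego deg_nb by auto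
  moreover have "nb n E x = (nb n E x \<inter> NN) \<union> (nb n E x \<inter> XX)"
  proof -
    have "nb n E x \<subseteq> CC" using nb_C x C_dec by blast
    moreover have "w \<notin> nb n E x"
    proof
      assume "w \<in> nb n E x" then have "E x w" unfolding nb_def by simp
      then have "x \<in> NN" using inN xn by simp
      then show False using x NX by blast
    qed
    ultimately show ?thesis using C_dec by auto
  qed
  ultimately have "D = card (nb n E x \<inter> NN) + card (nb n E x \<inter> XX)"
    using NX by (metis card_Un_disjoint finite_Int finite_nb inf_assoc inf_bot_right inf_commute)
  then show ?thesis unfolding mm_def by simp
qed

lemma mm_le_N: "u \<in> NN \<Longrightarrow> mm u \<le> D - 2"
proof -
  assume u: "u \<in> NN"
  have "nb n E u \<inter> NN \<subseteq> NN - {u}" using graph_irr[OF g] unfolding nb_def by auto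
  then have "mm u \<le> card (NN - {u})" unfolding mm_def using finN by (intro card_mono) auto
  then show ?thesis using card_N u finN by simp
qed

lemma dX_le: "x \<in> XX \<Longrightarrow> card (nb n E x \<inter> XX) \<le> card XX - 1"
proof -
  assume x: "x \<in> XX"
  have "nb n E x \<inter> XX \<subseteq> XX - {x}" using graph_irr[OF g] unfolding nb_def by auto
  then have "card (nb n E x \<inter> XX) \<le> card (XX - {x})" using finX by (intro card_mono) auto
  then show ?thesis using x finX by simp
qed

lemma P1w: "y < n \<Longrightarrow> P n E 1 y w = (if y \<in> NN then 1 else 0)"
proof -
  assume y: "y < n"
  have "P n E 1 y w = (\<Sum>z\<in>nb n E y. if z = w then 1 else 0)" by simp
  also have "\<dots> = (if w \<in> nb n E y then 1 else 0)" by (simp add: sum.delta)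
  also have "(w \<in> nb n E y) = (y \<in> NN)" using inN[OF y] wn unfolding nb_def by simp
  finally show ?thesis .
qed

lemma P2w: "y < n \<Longrightarrow> P n E 2 y w = mm y"
proof -
  assume y: "y < n"
  have "P n E 2 y w = (\<Sum>z\<in>nb n E y. P n E 1 z w)" by (simp add: numeral_2_eq_2)
  also have "\<dots> = (\<Sum>z\<in>nb n E y. if z \<in> NN then 1 else 0)"
  proof (rule sum.cong[OF refl])
    fix z assume "z \<in> nb n E y"
    then have "z < n" unfolding nb_def by simp
    then show "P n E 1 z w = (if z \<in> NN then 1 else 0)" by (rule P1w)
  qed
  also have "\<dots> = mm y" unfolding mm_def by (simp add: sum.If_cases Int_def)
  finally show ?thesis .
qed

lemma c0: "P n E 0 w w = 1" by simp
lemma c1: "P n E 1 w w = 0" using P1w[OF wn] w_N by simp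
lemma c2: "P n E 2 w w = D - 1"
  using P2w[OF wn] card_N unfolding mm_def NN_def by simp
lemma c3: "P n E 3 w w = (\<Sum>x\<in>NN. mm x)"
proof -
  have "P n E 3 w w = (\<Sum>x\<in>NN. P n E 2 x w)" by (simp add: numeral_3_eq_3 numeral_2_eq_2 NN_def)
  also have "\<dots> = (\<Sum>x\<in>NN. mm x)" by (rule sum.cong) (use N_lt P2w in auto)
  finally show ?thesis .
qed
lemma c4: "P n E 4 w w = (\<Sum>y<n. mm y * mm y)"
proof -
  have "P n E 4 w w = (\<Sum>x\<in>NN. \<Sum>y\<in>nb n E x. P n E 2 y w)"
    by (simp add: NN_def numeral_eq_Suc)
  also have "\<dots> = (\<Sum>x\<in>NN. \<Sum>y\<in>nb n E x. mm y)"
    by (intro sum.cong refl) (auto simp: P2w nb_def)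
  also have "\<dots> = (\<Sum>y<n. card {x\<in>NN. E y x} * mm y)"
    by (rule sum_swap_nb[OF g N_lt])
  also have "\<dots> = (\<Sum>y<n. mm y * mm y)"
  proof (rule sum.cong[OF refl])
    fix y assume "y \<in> {..<n}"
    have "{x\<in>NN. E y x} = nb n E y \<inter> NN" using N_lt unfolding nb_def by auto
    then show "card {x\<in>NN. E y x} * mm y = mm y * mm y" unfolding mm_def by simp
  qed
  finally show ?thesis .
qed

lemma mm_out: "y < n \<Longrightarrow> y \<notin> CC \<Longrightarrow> mm y = 0"
proof -
  assume y: "y < n" "y \<notin> CC"
  have "nb n E y \<inter> NN = {}"
  proof (rule ccontr)
    assume "nb n E y \<inter> NN \<noteq> {}"
    then obtain x where "x \<in> NN" "E y x" unfolding nb_def by auto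
    then have "E x y" using graph_sym[OF g] by blast
    then have "y \<in> CC" using \<open>x \<in> NN\<close> N_C unfolding CC_def using comp_closed by blast
    then show False using y by blast
  qed
  then show ?thesis unfolding mm_def by simp
qed

lemma mm_w: "mm w = D - 1" unfolding mm_def using card_N NN_def by simp

lemma c4_split: "P n E 4 w w = (D-1)*(D-1) + (\<Sum>x\<in>NN. mm x * mm x) + (\<Sum>x\<in>XX. mm x * mm x)"
proof -
  have "(\<Sum>y<n. mm y * mm y) = (\<Sum>y\<in>CC. mm y * mm y)"
    by (rule sum.mono_neutral_right) (use C_lt mm_out in auto)
  also have "\<dots> = mm w * mm w + (\<Sum>y\<in>NN \<union> XX. mm y * mm y)"
    using C_dec finN finX w_N wX by simp
  also have "\<dots> = (D-1)*(D-1) + (\<Sum>x\<in>NN. mm x * mm x) + (\<Sum>x\<in>XX. mm x * mm x)"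
    using NX finN finX mm_w by (simp add: sum.union_disjoint)
  finally show ?thesis using c4 by simp
qed

definition "tt = (\<Sum>x\<in>XX. mm x)"

lemma t_alt: "tt = (\<Sum>u\<in>NN. card (nb n E u \<inter> XX))"
  unfolding tt_def mm_def using double_count[OF g N_lt X_lt] by simp

lemma SN_eq: "(\<Sum>x\<in>NN. mm x) + tt = (D-1)*(D-1)"
proof -
  have "(\<Sum>x\<in>NN. mm x) + tt = (\<Sum>u\<in>NN. mm u + card (nb n E u \<inter> XX))"
    by (simp add: t_alt sum.distrib)
  also have "\<dots> = (\<Sum>u\<in>NN. D - 1)" by (rule sum.cong) (use degN in force)+
  finally show ?thesis using card_N by simp
qed

lemma SX_eq: "(\<Sum>x\<in>XX. card (nb n E x \<inter> XX)) + tt = D * card XX"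
proof -
  have "(\<Sum>x\<in>XX. card (nb n E x \<inter> XX)) + tt = (\<Sum>x\<in>XX. mm x + card (nb n E x \<inter> XX))"
    by (simp add: tt_def sum.distrib)
  also have "\<dots> = (\<Sum>x\<in>XX. D)" by (rule sum.cong) (use degX in force)+
  finally show ?thesis by (simp add: mult.commute)
qed

lemma SX_le: "(\<Sum>x\<in>XX. card (nb n E x \<inter> XX)) \<le> card XX * (card XX - 1)"
proof -
  have "(\<Sum>x\<in>XX. card (nb n E x \<inter> XX)) \<le> (\<Sum>x\<in>XX. card XX - 1)"
    by (rule sum_mono) (rule dX_le)
  then show ?thesis by simp
qed

lemma t_ge: "tt \<ge> D - 1"
proof -
  have "(\<Sum>u\<in>NN. 1) \<le> (\<Sum>u\<in>NN. card (nb n E u \<inter> XX))"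
  proof (rule sum_mono)
    fix u assume u: "u \<in> NN"
    show "1 \<le> card (nb n E u \<inter> XX)" using degN[OF u] mm_le_N[OF u] D3 by simp
  qed
  then show ?thesis using card_N t_alt by simp
qed

lemma arith_facts: "tt \<ge> 2 * (D - 1)"
  "tt = 2 * (D - 1) \<Longrightarrow> (card XX = 2 \<or> card XX = D - 1) \<and>
      (\<Sum>x\<in>XX. card (nb n E x \<inter> XX)) = card XX * (card XX - 1)"
  using arith_main[OF Dodd D3 SN_eq SX_eq SX_le even_count[OF g N_lt, folded mm_def]
      even_count[OF g X_lt] t_ge s_le] by auto

lemma c3_le: "P n E 3 w w \<le> (D-1)*(D-3)"
proof -
  have "P n E 3 w w + tt = (D-1)*(D-1)" using c3 SN_eq by simp
  moreover have "(D-1)*(D-1) = (D-1)*(D-3) + 2*(D-1)"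
  proof -
    obtain a where "D = 3 + a" using D3 le_Suc_ex by blast
    then show ?thesis by (simp add: algebra_simps)
  qed
  ultimately show ?thesis using arith_facts(1) by linarith
qed

end

context ng2 begin

lemma t_eq: "P n E 3 w w = (D-1)*(D-3) \<Longrightarrow> tt = 2 * (D - 1)"
proof -
  assume h: "P n E 3 w w = (D-1)*(D-3)"
  have "P n E 3 w w + tt = (D-1)*(D-1)" using c3 SN_eq by simp
  moreover have "(D-1)*(D-1) = (D-1)*(D-3) + 2*(D-1)"
  proof -
    obtain a where "D = 3 + a" using D3 le_Suc_ex by blast
    then show ?thesis by (simp add: algebra_simps)
  qed
  ultimately show ?thesis using h by linarith
qed

lemma dX_all: assumes "tt = 2 * (D - 1)" "x \<in> XX" shows "card (nb n E x \<inter> XX) = card XX - 1"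
proof -
  have "(\<Sum>x\<in>XX. card (nb n E x \<inter> XX)) = (card XX - 1) * card XX"
    using arith_facts(2)[OF assms(1)] by (simp add: mult.commute)
  then show ?thesis
    using all_eq_from_sum[where f = "\<lambda>x. card (nb n E x \<inter> XX)" and K = "card XX - 1" and A = XX]
      finX dX_le assms(2) by blast
qed

lemma mmX: assumes "tt = 2 * (D - 1)" "x \<in> XX" shows "mm x = D + 1 - card XX"
proof -
  have "card XX \<ge> 1" using assms(2) finX card_0_eq by fastforce
  then show ?thesis using degX[OF assms(2)] dX_all[OF assms] by simp
qed

lemma case2:
  assumes t: "tt = 2 * (D - 1)" and s: "card XX = 2"
  shows "(\<forall>x\<in>XX. mm x = D - 1)" and "(\<forall>u\<in>NN. mm u = D - 3)" and "P n E 4 w w = C4"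
proof -
  show mX: "\<forall>x\<in>XX. mm x = D - 1" using mmX[OF t] s by simp
  have ole: "\<And>u. u \<in> NN \<Longrightarrow> card (nb n E u \<inter> XX) \<le> 2"
    using s finX by (metis card_mono inf_le2)
  have "(\<Sum>u\<in>NN. card (nb n E u \<inter> XX)) = 2 * card NN" using t t_alt card_N by simp
  then have o2: "\<And>u. u \<in> NN \<Longrightarrow> card (nb n E u \<inter> XX) = 2"
    using all_eq_from_sum[where f = "\<lambda>u. card (nb n E u \<inter> XX)" and K = 2 and A = NN] finN ole
    by blast
  show mN: "\<forall>u\<in>NN. mm u = D - 3" using degN o2 by fastforce
  have "(\<Sum>x\<in>NN. mm x * mm x) = (D-1)*((D-3)*(D-3))" using mN card_N by simp
  moreover have "(\<Sum>x\<in>XX. mm x * mm x) = 2*((D-1)*(D-1))" using mX s by simp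
  ultimately show "P n E 4 w w = C4" using c4_split unfolding C4_def by simp
qed

lemma caseD1:
  assumes t: "tt = 2 * (D - 1)" and s: "card XX = D - 1" and s2: "card XX \<noteq> 2"
  shows "P n E 4 w w < C4"
proof -
  have D5: "D \<ge> 5" using s s2 D3 Dodd by presburger
  have mX: "\<forall>x\<in>XX. mm x = 2" using mmX[OF t] s D3 by simp
  have c3v: "(\<Sum>x\<in>NN. mm x) = (D-1)*(D-3)"
  proof -
    have "(\<Sum>x\<in>NN. mm x) + tt = (D-1)*(D-1)" by (rule SN_eq)
    moreover obtain a where "D = 3 + a" using D3 le_Suc_ex by blast
    ultimately show ?thesis using t by (simp add: algebra_simps)
  qed
  have "(\<Sum>x\<in>NN. mm x * mm x) \<le> (\<Sum>x\<in>NN. (D-2) * mm x)"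
    by (rule sum_mono) (use mm_le_N in simp)
  also have "\<dots> = (D-2)*((D-1)*(D-3))" using c3v by (simp add: sum_distrib_left[symmetric])
  finally have a1: "(\<Sum>x\<in>NN. mm x * mm x) \<le> (D-2)*((D-1)*(D-3))" .
  have a2: "(\<Sum>x\<in>XX. mm x * mm x) = 4*(D-1)" using mX s by simp
  obtain a where a: "D = 5 + a" using D5 le_Suc_ex by blast
  have "(D-1)*(D-1) + (D-2)*((D-1)*(D-3)) + 4*(D-1) + (D-1)*(D-3) = C4"
    unfolding C4_def by (simp add: a algebra_simps)
  moreover have "(D-1)*(D-3) > 0" using D5 by simp
  ultimately show ?thesis using c4_split a1 a2 by linarith
qed

lemma c4_le: "P n E 3 w w = (D-1)*(D-3) \<Longrightarrow> P n E 4 w w \<le> C4"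
  using t_eq arith_facts(2) case2 caseD1 by (metis less_imp_le_nat order_refl)

lemma c4_eq_s2: "P n E 3 w w = (D-1)*(D-3) \<Longrightarrow> P n E 4 w w = C4 \<Longrightarrow> card XX = 2"
  using t_eq arith_facts(2) caseD1 by (metis less_irrefl)

lemma rev_s2:
  assumes s: "card XX = 2" and full: "\<And>x. x \<in> XX \<Longrightarrow> NN \<subseteq> nb n E x"
  shows "P n E 3 w w = (D-1)*(D-3)" "P n E 4 w w = C4"
proof -
  have "\<And>x. x \<in> XX \<Longrightarrow> mm x = D - 1" unfolding mm_def using full card_N
    by (simp add: Int_absorb1)
  then have t: "tt = 2 * (D - 1)" unfolding tt_def using s by simp
  show "P n E 4 w w = C4" using case2(3)[OF t s] .
  have "P n E 3 w w + tt = (D-1)*(D-1)" using c3 SN_eq by simp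
  moreover obtain a where "D = 3 + a" using D3 le_Suc_ex by blast
  ultimately show "P n E 3 w w = (D-1)*(D-3)" using t by (simp add: algebra_simps)
qed

end

lemma matching:
  assumes "finite S" "\<And>u. u \<in> S \<Longrightarrow> p u \<in> S \<and> p u \<noteq> u \<and> p (p u) = u"
  shows "even (card S) \<and> (\<exists>g. bij_betw g S {0..<card S} \<and> (\<forall>u\<in>S. g (p u) div 2 = g u div 2))"
  using assms
proof (induction "card S" arbitrary: S rule: less_induct)
  case less
  show ?case
  proof (cases "S = {}")
    case True then show ?thesis by (auto simp: bij_betw_def)
  next
    case False
    then obtain a where a: "a \<in> S" by blast
    have pa: "p a \<in> S" "p a \<noteq> a" "p (p a) = a" using less.prems(2)[OF a] by auto
    define S' where "S' = S - {a, p a}"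
    have fS': "finite S'" using less.prems(1) S'_def by simp
    have cS: "card S = card S' + 2"
    proof -
      have "S = insert a (insert (p a) S')" using a pa S'_def by blast
      moreover have "a \<notin> insert (p a) S'" "p a \<notin> S'" using pa S'_def by auto
      ultimately show ?thesis using fS' by simp
    qed
    have pS': "\<And>u. u \<in> S' \<Longrightarrow> p u \<in> S' \<and> p u \<noteq> u \<and> p (p u) = u"
    proof -
      fix u assume u: "u \<in> S'"
      then have u1: "u \<in> S" "u \<noteq> a" "u \<noteq> p a" unfolding S'_def by auto
      have h: "p u \<in> S" "p u \<noteq> u" "p (p u) = u" using less.prems(2)[OF u1(1)] by auto
      have "p u \<noteq> a" using h u1 pa by metis
      moreover have "p u \<noteq> p a" using h u1 pa by metis
      ultimately show "p u \<in> S' \<and> p u \<noteq> u \<and> p (p u) = u" using h unfolding S'_def by auto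
    qed
    have "card S' < card S" using cS by simp
    from less.hyps[OF this fS' pS'] obtain g' where
      ev: "even (card S')" and g': "bij_betw g' S' {0..<card S'}" "\<forall>u\<in>S'. g' (p u) div 2 = g' u div 2"
      by blast
    define g where "g u = (if u = a then card S' else if u = p a then Suc (card S') else g' u)" for u
    have gS': "\<And>u. u \<in> S' \<Longrightarrow> g u = g' u" unfolding g_def S'_def by auto
    have g'lt: "\<And>u. u \<in> S' \<Longrightarrow> g' u < card S'" using g' bij_betwE by fastforce
    have inj: "inj_on g S"
    proof (rule inj_onI)
      fix u v assume uv: "u \<in> S" "v \<in> S" "g u = g v"
      show "u = v"
      proof (cases "u \<in> S'")
        case True
        note u = True
        show ?thesis
        proof (cases "v \<in> S'")
          case True
          then show ?thesis using u uv(3) gS' g'(1) by (metis bij_betw_iff_bijections)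
        next
          case False
          then have "v = a \<or> v = p a" using uv(2) S'_def by auto
          then show ?thesis using uv(3) gS'[OF u] g'lt[OF u] pa unfolding g_def by auto
        qed
      next
        case False
        then have u: "u = a \<or> u = p a" using uv(1) S'_def by auto
        show ?thesis
        proof (cases "v \<in> S'")
          case True
          then show ?thesis using uv(3) gS'[OF True] g'lt[OF True] pa u unfolding g_def by auto
        next
          case False
          then have "v = a \<or> v = p a" using uv(2) S'_def by auto
          then show ?thesis using u uv(3) pa unfolding g_def by auto
        qed
      qed
    qed
    have img: "g ` S = {0..<card S}"
    proof -
      have "S = S' \<union> {a, p a}" using a pa S'_def by blast
      then have "g ` S = g ` S' \<union> {g a, g (p a)}" by auto
      also have "g ` S' = g' ` S'" using gS' by (auto simp: image_def)
      also have "\<dots> = {0..<card S'}" using g'(1) by (simp add: bij_betw_def)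
      also have "{g a, g (p a)} = {card S', Suc (card S')}" unfolding g_def using pa by auto
      finally show ?thesis using cS by auto
    qed
    have "bij_betw g S {0..<card S}" using inj img by (simp add: bij_betw_def)
    moreover have "\<forall>u\<in>S. g (p u) div 2 = g u div 2"
    proof
      fix u assume u: "u \<in> S"
      show "g (p u) div 2 = g u div 2"
      proof (cases "u \<in> S'")
        case True
        then show ?thesis using pS' gS' g'(2) by metis
      next
        case False
        then have "u = a \<or> u = p a" using u S'_def by auto
        then show ?thesis using pa ev unfolding g_def by auto
      qed
    qed
    ultimately show ?thesis using ev cS by auto
  qed
qed

lemma div2_three: "(x::nat) div 2 = y div 2 \<Longrightarrow> x div 2 = z div 2 \<Longrightarrow> x \<noteq> y \<Longrightarrow> x \<noteq> z \<Longrightarrow> y \<noteq> z \<Longrightarrow> False"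
proof -
  assume h: "x div 2 = y div 2" "x div 2 = z div 2" "x \<noteq> y" "x \<noteq> z" "y \<noteq> z"
  have e: "x = 2*(x div 2) + x mod 2" "y = 2*(y div 2) + y mod 2" "z = 2*(z div 2) + z mod 2" by simp_all
  have m: "x mod 2 < 2" "y mod 2 < 2" "z mod 2 < 2" by simp_all
  show False using e m h by linarith
qed


lemma Hk_unf: "Hk (D+1) a b \<longleftrightarrow> a \<le> D+1 \<and> b \<le> D+1 \<and> a \<noteq> b \<and>
   ((a = 0 \<and> 1 \<le> b \<and> b \<le> D - 1) \<or> (1 \<le> a \<and> a \<le> D - 1 \<and> b = 0)
   \<or> (1 \<le> a \<and> a \<le> D - 1 \<and> 1 \<le> b \<and> b \<le> D - 1 \<and> (a - 1) div 2 \<noteq> (b - 1) div 2)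
   \<or> (1 \<le> a \<and> a \<le> D - 1 \<and> D \<le> b \<and> b \<le> D + 1)
   \<or> (D \<le> a \<and> a \<le> D + 1 \<and> 1 \<le> b \<and> b \<le> D - 1)
   \<or> (D \<le> a \<and> a \<le> D + 1 \<and> D \<le> b \<and> b \<le> D + 1))"
  unfolding Hk_def Let_def by simp

lemma Hk_mm: "D \<ge> 3 \<Longrightarrow> 1 \<le> a \<Longrightarrow> a \<le> D - 1 \<Longrightarrow> 1 \<le> b \<Longrightarrow> b \<le> D - 1 \<Longrightarrow>
   Hk (D+1) a b \<longleftrightarrow> a \<noteq> b \<and> (a - 1) div 2 \<noteq> (b - 1) div 2"
proof -
  assume h: "D \<ge> 3" "1 \<le> a" "a \<le> D - 1" "1 \<le> b" "b \<le> D - 1"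
  then have "a \<noteq> 0" "b \<noteq> 0" "\<not> D \<le> a" "\<not> D \<le> b" "a \<le> D + 1" "b \<le> D + 1" by auto
  with h show ?thesis unfolding Hk_unf by simp
qed
lemma Hk_0m: "D \<ge> 3 \<Longrightarrow> 1 \<le> b \<Longrightarrow> b \<le> D - 1 \<Longrightarrow> Hk (D+1) 0 b \<and> Hk (D+1) b 0"
proof -
  assume h: "D \<ge> 3" "1 \<le> b" "b \<le> D - 1"
  then have "b \<noteq> 0" "b \<le> D + 1" by auto
  with h show ?thesis unfolding Hk_unf by simp
qed
lemma Hk_0t: "D \<ge> 3 \<Longrightarrow> b = D \<or> b = D + 1 \<Longrightarrow> \<not> Hk (D+1) 0 b \<and> \<not> Hk (D+1) b 0"
proof -
  assume h: "D \<ge> 3" "b = D \<or> b = D + 1"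
  then have "\<not> b \<le> D - 1" "b \<noteq> 0" by auto
  with h show ?thesis unfolding Hk_unf by auto
qed
lemma Hk_mt: "D \<ge> 3 \<Longrightarrow> 1 \<le> a \<Longrightarrow> a \<le> D - 1 \<Longrightarrow> b = D \<or> b = D + 1 \<Longrightarrow> Hk (D+1) a b \<and> Hk (D+1) b a"
proof -
  assume h: "D \<ge> 3" "1 \<le> a" "a \<le> D - 1" "b = D \<or> b = D + 1"
  then have "a \<noteq> b" "a \<le> D + 1" "b \<le> D + 1" "D \<le> b" by auto
  with h show ?thesis unfolding Hk_unf by auto
qed
lemma Hk_tt: "D \<ge> 3 \<Longrightarrow> Hk (D+1) D (D+1) \<and> Hk (D+1) (D+1) D"
  unfolding Hk_unf by simp
lemma Hk_irr: "\<not> Hk k a a" unfolding Hk_def by simp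

context ng2 begin

lemma struct_iso:
  assumes s: "card XX = 2" and full: "\<forall>x\<in>XX. NN \<subseteq> nb n E x"
    and mN: "\<forall>u\<in>NN. mm u = D - 3" and dX1: "\<forall>x\<in>XX. card (nb n E x \<inter> XX) = 1"
  shows "comp_iso E CC (Hk (D+1)) (Suc (D+1))"
proof -
  have "\<exists>x y. XX = {x, y} \<and> x \<noteq> y" using s by (simp only: card_2_iff)
  then obtain x1 x2 where X: "XX = {x1, x2}" "x1 \<noteq> x2" by (elim exE conjE)
  have x12: "E x1 x2"
  proof -
    have "nb n E x1 \<inter> XX \<subseteq> {x2}" using X graph_irr[OF g] unfolding nb_def by auto
    moreover have "card (nb n E x1 \<inter> XX) = 1" using dX1 X by simp
    ultimately have "x2 \<in> nb n E x1" by (metis card_0_eq finite.emptyI finite.insertI subset_singletonD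
          Int_iff insertI1 zero_neq_one)
    then show ?thesis unfolding nb_def by simp
  qed
  have xN: "\<And>x u. x \<in> XX \<Longrightarrow> u \<in> NN \<Longrightarrow> E x u" using full unfolding nb_def by blast
  define R where "R u = (NN - {u}) - nb n E u" for u
  have R1: "\<And>u. u \<in> NN \<Longrightarrow> card (R u) = 1"
  proof -
    fix u assume u: "u \<in> NN"
    have "(NN - {u}) \<inter> nb n E u = nb n E u \<inter> NN" using graph_irr[OF g] unfolding nb_def by auto
    then have "card (R u) = card (NN - {u}) - mm u" unfolding R_def mm_def
      by (simp add: card_Diff_subset_Int finN)
    then show "card (R u) = 1" using mN u card_N finN D3 by simp
  qed
  define p where "p u = the_elem (R u)" for u
  have Rp: "\<And>u. u \<in> NN \<Longrightarrow> R u = {p u}"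
    unfolding p_def using R1 by (metis card_1_singletonE the_elem_eq)
  have p1: "\<And>u. u \<in> NN \<Longrightarrow> p u \<in> NN \<and> p u \<noteq> u \<and> \<not> E u (p u)"
  proof -
    fix u assume u: "u \<in> NN"
    have "p u \<in> R u" using Rp[OF u] by simp
    then show "p u \<in> NN \<and> p u \<noteq> u \<and> \<not> E u (p u)" unfolding R_def nb_def using N_lt by auto
  qed
  have p2: "\<And>u v. u \<in> NN \<Longrightarrow> v \<in> NN \<Longrightarrow> v \<noteq> u \<Longrightarrow> E u v \<longleftrightarrow> v \<noteq> p u"
  proof -
    fix u v assume uv: "u \<in> NN" "v \<in> NN" "v \<noteq> u"
    show "E u v \<longleftrightarrow> v \<noteq> p u"
    proof
      assume "E u v" then show "v \<noteq> p u" using p1[OF uv(1)] by auto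
    next
      assume "v \<noteq> p u"
      then have "v \<notin> R u" using Rp[OF uv(1)] by simp
      then show "E u v" unfolding R_def nb_def using uv N_lt by auto
    qed
  qed
  have pp: "\<And>u. u \<in> NN \<Longrightarrow> p u \<in> NN \<and> p u \<noteq> u \<and> p (p u) = u"
  proof -
    fix u assume u: "u \<in> NN"
    have a: "p u \<in> NN" "p u \<noteq> u" "\<not> E u (p u)" using p1[OF u] by auto
    have "\<not> E (p u) u" using a(3) graph_sym[OF g] by blast
    then have "\<not> (u \<noteq> p (p u))" using p2[OF a(1) u] a(2) by auto
    then show "p u \<in> NN \<and> p u \<noteq> u \<and> p (p u) = u" using a by simp
  qed
  obtain gg where gg: "bij_betw gg NN {0..<card NN}" "\<forall>u\<in>NN. gg (p u) div 2 = gg u div 2"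
    using matching[OF finN pp] by blast
  have gglt: "\<And>u. u \<in> NN \<Longrightarrow> gg u < D - 1" using gg(1) card_N bij_betwE by fastforce
  have gginj: "\<And>u v. u \<in> NN \<Longrightarrow> v \<in> NN \<Longrightarrow> gg u = gg v \<Longrightarrow> u = v"
    using gg(1) unfolding bij_betw_def inj_on_def by blast
  have NNE: "\<And>u v. u \<in> NN \<Longrightarrow> v \<in> NN \<Longrightarrow> u \<noteq> v \<Longrightarrow> E u v \<longleftrightarrow> gg u div 2 \<noteq> gg v div 2"
  proof -
    fix u v assume uv: "u \<in> NN" "v \<in> NN" "u \<noteq> v"
    show "E u v \<longleftrightarrow> gg u div 2 \<noteq> gg v div 2"
    proof
      assume "E u v"
      then have vp: "v \<noteq> p u" using p2[OF uv(1) uv(2)] uv(3) by auto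
      show "gg u div 2 \<noteq> gg v div 2"
      proof
        assume h: "gg u div 2 = gg v div 2"
        have "gg (p u) div 2 = gg u div 2" using gg(2) uv(1) by blast
        moreover have "gg u \<noteq> gg v" using gginj uv by blast
        moreover have "gg u \<noteq> gg (p u)" using gginj[of u "p u"] pp[OF uv(1)] uv(1) by auto
        moreover have "gg v \<noteq> gg (p u)" using gginj[of v "p u"] pp[OF uv(1)] uv vp by auto
        ultimately show False using h div2_three[of "gg u" "gg v" "gg (p u)"] by simp
      qed
    next
      assume "gg u div 2 \<noteq> gg v div 2"
      then have "v \<noteq> p u" using gg(2) uv(1) by auto
      then show "E u v" using p2[OF uv(1) uv(2)] uv(3) by auto
    qed
  qed
  define f where "f v = (if v = w then 0 else if v \<in> NN then gg v + 1 else if v = x1 then D else D + 1)" for v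
  have fw: "f w = 0" unfolding f_def by simp
  have fN: "\<And>u. u \<in> NN \<Longrightarrow> f u = gg u + 1" unfolding f_def using w_N by auto
  have fx1: "f x1 = D" and fx2: "f x2 = D + 1" unfolding f_def using X wX NX by auto
  have Ceq: "CC = insert w (NN \<union> {x1, x2})" using C_dec X by simp
  have cases: "\<And>u. u \<in> CC \<Longrightarrow> u = w \<or> u \<in> NN \<or> u = x1 \<or> u = x2" using Ceq by blast
  have ww: "\<not> E w w" using graph_irr[OF g] by blast
  have wN: "\<And>u. u \<in> NN \<Longrightarrow> E w u \<and> E u w" using graph_sym[OF g] unfolding NN_def nb_def by blast
  have wx: "\<And>x. x \<in> XX \<Longrightarrow> \<not> E w x \<and> \<not> E x w"
  proof -
    fix x assume x: "x \<in> XX"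
    have "x \<notin> NN" using x NX by blast
    then show "\<not> E w x \<and> \<not> E x w" using graph_sym[OF g] X_lt x unfolding NN_def nb_def by blast
  qed
  have iso: "\<forall>u\<in>CC. \<forall>v\<in>CC. E u v \<longleftrightarrow> Hk (D+1) (f u) (f v)"
  proof (intro ballI)
    fix u v assume u: "u \<in> CC" and v: "v \<in> CC"
    have gm: "\<And>u. u \<in> NN \<Longrightarrow> 1 \<le> gg u + 1 \<and> gg u + 1 \<le> D - 1" using gglt by fastforce
    have x1X: "x1 \<in> XX" and x2X: "x2 \<in> XX" using X by auto
    have E21: "E x2 x1" using x12 graph_sym[OF g] by blast
    show "E u v \<longleftrightarrow> Hk (D+1) (f u) (f v)"
      using cases[OF u] cases[OF v]
    proof (elim disjE)
      assume "u = w" "v = w" then show ?thesis using ww fw Hk_irr by simp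
    next
      assume a: "u = w" "v \<in> NN" then show ?thesis using wN fw fN Hk_0m[OF D3] gm by simp
    next
      assume a: "u = w" "v = x1" then show ?thesis using wx[OF x1X] fw fx1 Hk_0t[OF D3] by simp
    next
      assume a: "u = w" "v = x2" then show ?thesis using wx[OF x2X] fw fx2 Hk_0t[OF D3] by simp
    next
      assume a: "u \<in> NN" "v = w" then show ?thesis using wN fw fN Hk_0m[OF D3] gm by simp
    next
      assume a: "u \<in> NN" "v \<in> NN"
      show ?thesis
      proof (cases "u = v")
        case True then show ?thesis using graph_irr[OF g] Hk_irr by simp
      next
        case False
        have "gg u \<noteq> gg v" using gginj a False by blast
        then show ?thesis using NNE[OF a False] fN a Hk_mm[OF D3, of "gg u + 1" "gg v + 1"] gm[OF a(1)] gm[OF a(2)]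
          by simp
      qed
    next
      assume a: "u \<in> NN" "v = x1"
      have "E u v" using xN[OF x1X a(1)] graph_sym[OF g] a(2) by blast
      then show ?thesis using fN[OF a(1)] a(2) fx1 Hk_mt[OF D3, of "gg u + 1" D] Hk_mt[OF D3, of "gg u + 1" "D+1"] gm[OF a(1)] by auto
    next
      assume a: "u \<in> NN" "v = x2"
      have "E u v" using xN[OF x2X a(1)] graph_sym[OF g] a(2) by blast
      then show ?thesis using fN[OF a(1)] a(2) fx2 Hk_mt[OF D3, of "gg u + 1" D] Hk_mt[OF D3, of "gg u + 1" "D+1"] gm[OF a(1)] by auto
    next
      assume a: "u = x1" "v = w" then show ?thesis using wx[OF x1X] fw fx1 Hk_0t[OF D3] by simp
    next
      assume a: "u = x1" "v \<in> NN"
      have "E u v" using xN[OF x1X a(2)] a(1) by blast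
      then show ?thesis using fN[OF a(2)] a(1) fx1 Hk_mt[OF D3, of "gg v + 1" D] Hk_mt[OF D3, of "gg v + 1" "D+1"] gm[OF a(2)] by auto
    next
      assume a: "u = x1" "v = x1" then show ?thesis using graph_irr[OF g] Hk_irr by simp
    next
      assume a: "u = x1" "v = x2" then show ?thesis using x12 fx1 fx2 Hk_tt[OF D3] by simp
    next
      assume a: "u = x2" "v = w" then show ?thesis using wx[OF x2X] fw fx2 Hk_0t[OF D3] by simp
    next
      assume a: "u = x2" "v \<in> NN"
      have "E u v" using xN[OF x2X a(2)] a(1) by blast
      then show ?thesis using fN[OF a(2)] a(1) fx2 Hk_mt[OF D3, of "gg v + 1" D] Hk_mt[OF D3, of "gg v + 1" "D+1"] gm[OF a(2)] by auto
    next
      assume a: "u = x2" "v = x1" then show ?thesis using E21 fx1 fx2 Hk_tt[OF D3] by simp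
    next
      assume a: "u = x2" "v = x2" then show ?thesis using graph_irr[OF g] Hk_irr by simp
    qed
  qed
  have img: "f ` CC \<subseteq> {0..<Suc (D+1)}"
  proof
    fix y assume "y \<in> f ` CC"
    then obtain u where u: "u \<in> CC" "y = f u" by blast
    then show "y \<in> {0..<Suc (D+1)}" using cases[OF u(1)] fw fN fx1 fx2 gglt by fastforce
  qed
  have sur: "{0..<Suc (D+1)} \<subseteq> f ` CC"
  proof
    fix y assume y: "y \<in> {0..<Suc (D+1)}"
    show "y \<in> f ` CC"
    proof (cases "y = 0 \<or> y = D \<or> y = D + 1")
      case True
      then show ?thesis using fw fx1 fx2 w_C Ceq by (metis image_eqI insertI1 insert_iff UnI2 singletonI)
    next
      case False
      then have "y - 1 \<in> {0..<card NN}" using y card_N by auto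
      then obtain u where u: "u \<in> NN" "gg u = y - 1" using gg(1) unfolding bij_betw_def by (metis imageE)
      then have "f u = y" using fN False by simp
      then show ?thesis using u N_C by blast
    qed
  qed
  have fim: "f ` CC = {0..<Suc (D+1)}" using img sur by blast
  have cC: "card CC = Suc (D+1)" using card_C s by simp
  have inj: "inj_on f CC" using fim cC finC by (intro eq_card_imp_inj_on) auto
  have "bij_betw f CC {0..<Suc (D+1)}" using inj fim by (simp add: bij_betw_def)
  then show ?thesis unfolding comp_iso_def using iso by blast
qed

end

lemma iso_nb:
  assumes C: "C \<subseteq> {..<n}" and cl: "\<And>u. u \<in> C \<Longrightarrow> nb n E u \<subseteq> C"
    and f: "bij_betw f C {0..<N}" and iso: "\<forall>u\<in>C. \<forall>v\<in>C. E u v \<longleftrightarrow> H (f u) (f v)"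
    and u: "u \<in> C"
  shows "bij_betw f (nb n E u) (nb N H (f u))"
proof -
  have sub: "nb n E u \<subseteq> C" using cl[OF u] .
  have inj: "inj_on f (nb n E u)" using f sub unfolding bij_betw_def by (meson inj_on_subset)
  have "f ` nb n E u = nb N H (f u)"
  proof
    show "f ` nb n E u \<subseteq> nb N H (f u)"
    proof
      fix y assume "y \<in> f ` nb n E u"
      then obtain x where x: "x \<in> nb n E u" "y = f x" by blast
      then have "x \<in> C" using sub by blast
      then have "f x < N" using f bij_betwE by fastforce
      moreover have "H (f u) (f x)" using iso u \<open>x \<in> C\<close> x(1) unfolding nb_def by blast
      ultimately show "y \<in> nb N H (f u)" using x unfolding nb_def by simp
    qed
  next
    show "nb N H (f u) \<subseteq> f ` nb n E u"
    proof
      fix y assume y: "y \<in> nb N H (f u)"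
      then have "y \<in> {0..<N}" unfolding nb_def by simp
      then obtain x where x: "x \<in> C" "f x = y" using f unfolding bij_betw_def by (metis imageE)
      then have "E u x" using iso u y unfolding nb_def by blast
      moreover have "x < n" using x C by blast
      ultimately show "y \<in> f ` nb n E u" using x unfolding nb_def by blast
    qed
  qed
  then show ?thesis using inj by (simp add: bij_betw_def)
qed

lemma iso_P:
  assumes C: "C \<subseteq> {..<n}" and cl: "\<And>u. u \<in> C \<Longrightarrow> nb n E u \<subseteq> C"
    and f: "bij_betw f C {0..<N}" and iso: "\<forall>u\<in>C. \<forall>v\<in>C. E u v \<longleftrightarrow> H (f u) (f v)"
  shows "u \<in> C \<Longrightarrow> v \<in> C \<Longrightarrow> P n E l u v = P N H l (f u) (f v)"
proof (induction l arbitrary: u)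
  case 0
  have "u = v \<longleftrightarrow> f u = f v" using f 0 unfolding bij_betw_def inj_on_def by blast
  then show ?case by simp
next
  case (Suc l)
  have "P n E (Suc l) u v = (\<Sum>x\<in>nb n E u. P N H l (f x) (f v))"
    using Suc.IH cl[OF Suc.prems(1)] Suc.prems(2) by (simp add: subset_iff)
  also have "\<dots> = (\<Sum>y\<in>nb N H (f u). P N H l y (f v))"
    by (rule sum.reindex_bij_betw[OF iso_nb[OF C cl f iso Suc.prems(1)]])
  finally show ?case by simp
qed

lemma iso_deg:
  assumes C: "C \<subseteq> {..<n}" and cl: "\<And>u. u \<in> C \<Longrightarrow> nb n E u \<subseteq> C"
    and f: "bij_betw f C {0..<N}" and iso: "\<forall>u\<in>C. \<forall>v\<in>C. E u v \<longleftrightarrow> H (f u) (f v)"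
    and u: "u \<in> C"
  shows "card (nb n E u) = card (nb N H (f u))"
  using bij_betw_same_card[OF iso_nb[OF C cl f iso u]] .

lemma nb_Hk0: "D \<ge> 3 \<Longrightarrow> nb (Suc (D+1)) (Hk (D+1)) 0 = {1..D-1}"
  unfolding nb_def
  apply (rule set_eqI)
  apply (simp only: mem_Collect_eq Hk_unf atLeastAtMost_iff)
  apply simp
  apply (intro iffI; elim conjE; intro conjI; linarith)
  done

lemma comp_sub_closed:
  assumes "u \<in> S" "\<And>x y. x \<in> S \<Longrightarrow> E x y \<Longrightarrow> y \<in> S"
  shows "comp E u \<subseteq> S"
proof
  fix x assume "x \<in> comp E u"
  then have "E\<^sup>*\<^sup>* u x" unfolding comp_def by simp
  then show "x \<in> S" by (induction rule: rtranclp_induct) (use assms in auto)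
qed

definition wv :: "nat \<Rightarrow> nat \<Rightarrow> graph \<Rightarrow> nat" where
  "wv D n E = (THE v. v < n \<and> deg n E v = D - 1)"

lemma nr_ng:
  assumes "is_graph n E" "nearly_regular n D E" "D \<ge> 1"
  shows "ng n E D (wv D n E)"
proof -
  obtain v where v: "v < n" "deg n E v = D - 1" "\<And>u. u < n \<and> deg n E u = D - 1 \<Longrightarrow> u = v"
    using assms(2) unfolding nearly_regular_def by blast
  have w: "wv D n E = v" unfolding wv_def
  proof (rule the_equality)
    show "v < n \<and> deg n E v = D - 1" using v(1,2) by blast
    show "\<And>x. x < n \<and> deg n E x = D - 1 \<Longrightarrow> x = v" by (rule v(3))
  qed
  show ?thesis
  proof
    fix u assume u: "u < n" "u \<noteq> wv D n E"
    have "deg n E u = D \<or> deg n E u = D - 1" using assms(2) u(1) unfolding nearly_regular_def by blast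
    moreover have "deg n E u \<noteq> D - 1" using v(3)[of u] u w by blast
    ultimately show "deg n E u = D" by blast
  qed (use assms v(1,2) w in auto)
qed

lemma GDn_ng2:
  assumes "E \<in> GDn D n" "odd D" "D \<ge> 3"
  shows "ng2 n E D (wv D n E)"
proof -
  have a: "is_graph n E" "nearly_regular n D E" "\<forall>v<n. card (comp E v) \<le> 2 * D"
    using assms(1) unfolding GDn_def by auto
  interpret ng n E D "wv D n E" using nr_ng[OF a(1,2)] assms(3) by simp
  show ?thesis using a(3) wn assms(2,3) by unfold_locales auto
qed


lemma Vfam_props:
  assumes V: "E \<in> Vfam (D+1) n" and Dodd: "odd D" and D3: "D \<ge> 3"
  shows "E \<in> GDn D n" and "\<And>j. P n E j (wv D n E) (wv D n E) = P (Suc (D+1)) (Hk (D+1)) j 0 0"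
proof -
  have g: "is_graph n E" and nr: "nearly_regular n D E" using V unfolding Vfam_def by auto
  obtain v where v: "v < n" "comp_iso E (comp E v) (Hk (D+1)) (Suc (D+1))"
    and oth: "\<And>u. u < n \<Longrightarrow> comp E u \<noteq> comp E v \<Longrightarrow> card (comp E u) \<le> 2 * (D+1) - 2"
    using V unfolding Vfam_def by auto
  obtain f where f: "bij_betw f (comp E v) {0..<Suc (D+1)}"
    and iso: "\<forall>u\<in>comp E v. \<forall>x\<in>comp E v. E u x \<longleftrightarrow> Hk (D+1) (f u) (f x)"
    using v(2) unfolding comp_iso_def by blast
  have cv: "card (comp E v) = Suc (D+1)" using bij_betw_same_card[OF f] by simp
  have comps: "\<forall>u<n. card (comp E u) \<le> 2 * D"
  proof (intro allI impI)
    fix u assume u: "u < n"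
    show "card (comp E u) \<le> 2 * D"
    proof (cases "comp E u = comp E v")
      case True then show ?thesis using cv D3 by simp
    next
      case False then show ?thesis using oth[OF u] by simp
    qed
  qed
  show "E \<in> GDn D n" unfolding GDn_def using g nr comps by simp
  interpret ng n E D "wv D n E" using nr_ng[OF g nr] D3 by simp
  have C: "comp E v \<subseteq> {..<n}" by (rule comp_lt[OF g v(1)])
  have cl: "\<And>u. u \<in> comp E v \<Longrightarrow> nb n E u \<subseteq> comp E v" unfolding nb_def using comp_closed by blast
  obtain u0 where u0: "u0 \<in> comp E v" "f u0 = 0"
    using f unfolding bij_betw_def by (metis atLeastLessThan_iff imageE zero_less_Suc le0)
  have "card (nb n E u0) = card (nb (Suc (D+1)) (Hk (D+1)) 0)"
    using iso_deg[OF C cl f iso u0(1)] u0(2) by simp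
  also have "\<dots> = D - 1" using nb_Hk0[OF D3] by simp
  finally have du0: "deg n E u0 = D - 1" using deg_nb by simp
  have "u0 = wv D n E"
  proof (rule ccontr)
    assume "u0 \<noteq> wv D n E"
    then have "deg n E u0 = D" using dego u0(1) C by blast
    then show False using du0 D3 by simp
  qed
  then show "\<And>j. P n E j (wv D n E) (wv D n E) = P (Suc (D+1)) (Hk (D+1)) j 0 0"
    using iso_P[OF C cl f iso u0(1) u0(1)] u0(2) by simp
qed

lemma struct_Vfam:
  assumes G: "E \<in> GDn D n" and Dodd: "odd D" and D3: "D \<ge> 3"
    and h3: "P n E 3 (wv D n E) (wv D n E) = (D-1)*(D-3)"
    and h4: "P n E 4 (wv D n E) (wv D n E) = ng2.C4 D"
  shows "E \<in> Vfam (D+1) n"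
proof -
  interpret ng2 n E D "wv D n E" by (rule GDn_ng2[OF G Dodd D3])
  have s: "card XX = 2" using c4_eq_s2 h3 h4 by simp
  have t: "tt = 2 * (D - 1)" using t_eq h3 by simp
  have mX: "\<forall>x\<in>XX. mm x = D - 1" using case2(1)[OF t s] .
  have full: "\<forall>x\<in>XX. NN \<subseteq> nb n E x"
  proof
    fix x assume x: "x \<in> XX"
    have "nb n E x \<inter> NN \<subseteq> NN" by blast
    moreover have "card (nb n E x \<inter> NN) = card NN" using mX x card_N unfolding mm_def by simp
    ultimately have "nb n E x \<inter> NN = NN" using finN by (metis card_subset_eq)
    then show "NN \<subseteq> nb n E x" by blast
  qed
  have mN: "\<forall>u\<in>NN. mm u = D - 3" using case2(2)[OF t s] .
  have dX1: "\<forall>x\<in>XX. card (nb n E x \<inter> XX) = 1" using dX_all[OF t] s by simp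
  have iso: "comp_iso E CC (Hk (D+1)) (Suc (D+1))" by (rule struct_iso[OF s full mN dX1])
  have g': "is_graph n E" "nearly_regular n D E" "\<forall>v<n. card (comp E v) \<le> 2 * D"
    using G unfolding GDn_def by auto
  show ?thesis unfolding Vfam_def using g' iso wn unfolding CC_def
    by (auto intro!: exI[of _ "wv D n E"])
qed


lemma seq_a:
  fixes a a' c c' :: "nat \<Rightarrow> nat"
  assumes "\<And>i. a (Suc i) + c i = D * a i" "\<And>i. a' (Suc i) + c' i = D * a' i" "a 0 = a' 0"
    "\<And>i. i < j \<Longrightarrow> c i = c' i"
  shows "i \<le> j \<Longrightarrow> a i = a' i"
proof (induction i)
  case 0 then show ?case using assms(3) by simp
next
  case (Suc i)
  then have "a i = a' i" "c i = c' i" using assms(4) by auto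
  then show ?case using assms(1,2)[of i] by simp
qed

lemma seq_b:
  fixes a a' c c' :: "nat \<Rightarrow> nat"
  assumes "\<And>i. a (Suc i) + c i = D * a i" "\<And>i. a' (Suc i) + c' i = D * a' i"
    "\<And>i. i \<le> j \<Longrightarrow> a i = a' i"
  shows "i < j \<Longrightarrow> c i = c' i"
proof -
  assume i: "i < j"
  then have "a i = a' i" "a (Suc i) = a' (Suc i)" using assms(3) by auto
  then show "c i = c' i" using assms(1,2)[of i] by simp
qed

lemma W0: "W n 0 E = n" unfolding W_def by (simp add: wc_0)

locale stp =
  fixes D n :: nat and G0 :: graph
  assumes Dodd: "odd D" and D3: "D \<ge> 3" and G0V: "G0 \<in> Vfam (D+1) n"
    and G03: "P n G0 3 (wv D n G0) (wv D n G0) = (D-1)*(D-3)"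
    and G04: "P n G0 4 (wv D n G0) (wv D n G0) = ng2.C4 D"
begin

abbreviation "F \<equiv> GDn D n"
definition "cc E j = P n E j (wv D n E) (wv D n E)"
definition "aa E j = walk_count n E j (wv D n E)"
definition "WW E j = W n j E"

lemma G0F: "G0 \<in> F" using Vfam_props(1)[OF G0V Dodd D3] .

lemma recs: assumes "E \<in> F"
  shows "\<And>i. aa E (Suc i) + cc E i = D * aa E i" "\<And>i. WW E (Suc i) + aa E i = D * WW E i"
    "aa E 0 = 1" "WW E 0 = n"
proof -
  interpret ng2 n E D "wv D n E" by (rule GDn_ng2[OF assms Dodd D3])
  show "\<And>i. aa E (Suc i) + cc E i = D * aa E i" unfolding aa_def cc_def using Q wn by simp
  show "\<And>i. WW E (Suc i) + aa E i = D * WW E i" unfolding aa_def WW_def using Wrec by simp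
  show "aa E 0 = 1" unfolding aa_def using wc_0 wn by simp
  show "WW E 0 = n" unfolding WW_def by (rule W0)
qed

lemma K: assumes E: "E \<in> F" and eq: "\<And>i. i < j \<Longrightarrow> cc E i = cc G0 i"
  shows "cc E j \<le> cc G0 j"
proof -
  interpret e: ng2 n E D "wv D n E" by (rule GDn_ng2[OF E Dodd D3])
  interpret z: ng2 n G0 D "wv D n G0" by (rule GDn_ng2[OF G0F Dodd D3])
  consider "j = 0" | "j = 1" | "j = 2" | "j = 3" | "j = 4" | "j \<ge> 5" by linarith
  then show ?thesis
  proof cases
    case 1 then show ?thesis unfolding cc_def by simp
  next
    case 2 then show ?thesis unfolding cc_def using e.c1 z.c1 by simp
  next
    case 3 then show ?thesis unfolding cc_def using e.c2 z.c2 by simp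
  next
    case 4 then show ?thesis unfolding cc_def using e.c3_le G03 by simp
  next
    case 5
    have "cc E 3 = cc G0 3" using eq 5 by simp
    then show ?thesis unfolding cc_def using e.c4_le G03 G04 5 by simp
  next
    case 6
    have "cc E 3 = cc G0 3" "cc E 4 = cc G0 4" using eq 6 by auto
    then have "E \<in> Vfam (D+1) n" using struct_Vfam[OF E Dodd D3] G03 G04 unfolding cc_def by simp
    then show ?thesis unfolding cc_def using Vfam_props(2)[OF _ Dodd D3] G0V by simp
  qed
qed

lemma Dprop: assumes E: "E \<in> F" and eq: "\<forall>j\<in>{1..l}. W n j E = W n j G0"
  shows "W n (Suc l) E \<le> W n (Suc l) G0"
proof -
  note r = recs[OF E] and r0 = recs[OF G0F]
  have Weq: "\<And>i. i \<le> l \<Longrightarrow> WW E i = WW G0 i"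
  proof -
    fix i assume "i \<le> l"
    then show "WW E i = WW G0 i" using eq r(4) r0(4) unfolding WW_def by (cases i) auto
  qed
  have aeq: "\<And>i. i < l \<Longrightarrow> aa E i = aa G0 i"
    using seq_b[of "WW E" "aa E" D "WW G0" "aa G0" l] r(2) r0(2) Weq by blast
  show ?thesis
  proof (cases l)
    case 0
    then show ?thesis using r(2)[of 0] r0(2)[of 0] r(3,4) r0(3,4) unfolding WW_def by simp
  next
    case (Suc m)
    have aeq': "\<And>i. i \<le> m \<Longrightarrow> aa E i = aa G0 i" using aeq Suc by simp
    have ceq: "\<And>i. i < m \<Longrightarrow> cc E i = cc G0 i"
      using seq_b[of "aa E" "cc E" D "aa G0" "cc G0" m] r(1) r0(1) aeq' by blast
    have "cc E m \<le> cc G0 m" by (rule K[OF E ceq])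
    then have "aa E (Suc m) \<ge> aa G0 (Suc m)" using r(1)[of m] r0(1)[of m] aeq'[of m] by simp
    then show ?thesis using r(2)[of l] r0(2)[of l] Weq[of l] Suc unfolding WW_def by simp
  qed
qed

lemma EXchar: "EX_ex n l F = {E\<in>F. \<forall>j\<in>{1..l}. W n j E = W n j G0}"
proof (induction l)
  case 0 then show ?case by simp
next
  case (Suc l)
  have G0l: "G0 \<in> EX_ex n l F" using Suc G0F by simp
  show ?case
  proof (rule set_eqI, rule iffI)
    fix E assume E: "E \<in> EX_ex n (Suc l) F"
    then have El: "E \<in> EX_ex n l F" and mx: "W n (Suc l) G0 \<le> W n (Suc l) E" using G0l by auto
    then have "E \<in> F" "\<forall>j\<in>{1..l}. W n j E = W n j G0" using Suc by auto
    moreover have "W n (Suc l) E \<le> W n (Suc l) G0" using Dprop calculation by blast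
    ultimately show "E \<in> {E\<in>F. \<forall>j\<in>{1..Suc l}. W n j E = W n j G0}" using mx
      by (auto simp: le_Suc_eq)
  next
    fix E assume "E \<in> {E\<in>F. \<forall>j\<in>{1..Suc l}. W n j E = W n j G0}"
    then have E: "E \<in> F" "\<forall>j\<in>{1..Suc l}. W n j E = W n j G0" by auto
    then have El: "E \<in> EX_ex n l F" using Suc by auto
    have "\<forall>G'\<in>EX_ex n l F. W n (Suc l) G' \<le> W n (Suc l) E"
    proof
      fix G' assume "G' \<in> EX_ex n l F"
      then have "G' \<in> F" "\<forall>j\<in>{1..l}. W n j G' = W n j G0" using Suc by auto
      then have "W n (Suc l) G' \<le> W n (Suc l) G0" using Dprop by blast
      then show "W n (Suc l) G' \<le> W n (Suc l) E" using E(2) by simp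
    qed
    then show "E \<in> EX_ex n (Suc l) F" using El by simp
  qed
qed

lemma final: "EX_inf n F = Vfam (D+1) n"
proof -
  have "EX_inf n F = {E\<in>F. \<forall>j\<ge>1. W n j E = W n j G0}"
    unfolding EX_inf_def EXchar by auto
  also have "\<dots> = Vfam (D+1) n"
  proof (rule set_eqI, rule iffI)
    fix E assume "E \<in> {E\<in>F. \<forall>j\<ge>1. W n j E = W n j G0}"
    then have E: "E \<in> F" "\<And>j. j \<ge> 1 \<Longrightarrow> W n j E = W n j G0" by auto
    note r = recs[OF E(1)] and r0 = recs[OF G0F]
    have Weq: "\<And>i. i \<le> 6 \<Longrightarrow> WW E i = WW G0 i"
      using E(2) r(4) r0(4) unfolding WW_def by (case_tac i) auto
    have aeq: "\<And>i. i \<le> 5 \<Longrightarrow> aa E i = aa G0 i"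
      using seq_b[of "WW E" "aa E" D "WW G0" "aa G0" 6] r(2) r0(2) Weq by force
    have ceq: "\<And>i. i < 5 \<Longrightarrow> cc E i = cc G0 i"
      using seq_b[of "aa E" "cc E" D "aa G0" "cc G0" 5] r(1) r0(1) aeq by blast
    then have "cc E 3 = cc G0 3" "cc E 4 = cc G0 4" by auto
    then show "E \<in> Vfam (D+1) n" using struct_Vfam[OF E(1) Dodd D3] G03 G04 unfolding cc_def by simp
  next
    fix E assume V: "E \<in> Vfam (D+1) n"
    have E: "E \<in> F" using Vfam_props(1)[OF V Dodd D3] .
    have ceq: "\<And>i. cc E i = cc G0 i" unfolding cc_def
      using Vfam_props(2)[OF V Dodd D3] Vfam_props(2)[OF G0V Dodd D3] by simp
    note r = recs[OF E] and r0 = recs[OF G0F]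
    have "\<And>j. j \<ge> 1 \<Longrightarrow> W n j E = W n j G0"
    proof -
      fix j :: nat assume "j \<ge> 1"
      have aeq: "\<And>i. i \<le> j \<Longrightarrow> aa E i = aa G0 i"
      proof -
        fix i assume i: "i \<le> j"
        show "aa E i = aa G0 i"
          by (rule seq_a[where a="aa E" and c="cc E" and a'="aa G0" and c'="cc G0" and D=D and j=j])
            (use r(1,3) r0(1,3) ceq i in auto)
      qed
      have "WW E j = WW G0 j"
        using seq_a[of "WW E" "aa E" D "WW G0" "aa G0" j] r(2,4) r0(2,4) aeq by simp
      then show "W n j E = W n j G0" unfolding WW_def .
    qed
    then show "E \<in> {E\<in>F. \<forall>j\<ge>1. W n j E = W n j G0}" using E by auto
  qed
  finally show ?thesis .
qed

end

lemma Hk_big: "b > D + 1 \<Longrightarrow> \<not> Hk (D+1) a b \<and> \<not> Hk (D+1) b a" unfolding Hk_def by auto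

lemma Hk_graph: "is_graph (Suc (D+1)) (Hk (D+1))"
  unfolding is_graph_def Hk_def Let_def by auto

lemma pair_div: "1 \<le> (y::nat) \<Longrightarrow> (y - 1) div 2 = q \<longleftrightarrow> y = 2*q+1 \<or> y = 2*q+2"
proof -
  assume y: "1 \<le> y"
  have e: "y - 1 = 2 * ((y-1) div 2) + (y-1) mod 2" by simp
  have m: "(y-1) mod 2 < 2" by simp
  show ?thesis
  proof
    assume "(y - 1) div 2 = q" then show "y = 2*q+1 \<or> y = 2*q+2" using e m y by linarith
  next
    assume "y = 2*q+1 \<or> y = 2*q+2" then show "(y - 1) div 2 = q" by auto
  qed
qed

lemma Hk_deg_mid:
  assumes D: "D \<ge> 3" "odd D" and u: "1 \<le> u" "u \<le> D - 1"
  shows "card (nb (Suc (D+1)) (Hk (D+1)) u) = D"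
proof -
  define q where "q = (u - 1) div 2"
  have uq: "u = 2*q+1 \<or> u = 2*q+2" using pair_div[OF u(1)] q_def by blast
  have q2: "2*q+2 \<le> D - 1" using uq u D by presburger
  define M where "M = {1..D-1} - {2*q+1, 2*q+2}"
  have cM: "card M = D - 3" unfolding M_def using q2 by (subst card_Diff_subset) auto
  have nbeq: "nb (Suc (D+1)) (Hk (D+1)) u = insert 0 (M \<union> {D, D+1})"
  proof (rule set_eqI)
    fix y
    have cases: "y = 0 \<or> (1 \<le> y \<and> y \<le> D - 1) \<or> y = D \<or> y = D + 1 \<or> y > D + 1" by linarith
    show "y \<in> nb (Suc (D+1)) (Hk (D+1)) u \<longleftrightarrow> y \<in> insert 0 (M \<union> {D, D+1})"
      using cases
    proof (elim disjE)
      assume y: "y = 0" then show ?thesis using Hk_0m[OF D(1) u] unfolding nb_def M_def by simp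
    next
      assume y: "1 \<le> y \<and> y \<le> D - 1"
      have "Hk (D+1) u y \<longleftrightarrow> u \<noteq> y \<and> (u - 1) div 2 \<noteq> (y - 1) div 2" using Hk_mm[OF D(1) u] y by blast
      also have "\<dots> \<longleftrightarrow> \<not> (y = 2*q+1 \<or> y = 2*q+2)" using pair_div[of y q] y q_def uq by auto
      finally show ?thesis using y D unfolding nb_def M_def by auto
    next
      assume y: "y = D" then show ?thesis using Hk_mt[OF D(1) u, of y] q2 unfolding nb_def M_def by auto
    next
      assume y: "y = D + 1" then show ?thesis using Hk_mt[OF D(1) u, of y] q2 unfolding nb_def M_def by auto
    next
      assume y: "y > D + 1" then show ?thesis using Hk_big[OF y] unfolding nb_def M_def by auto
    qed
  qed
  have "0 \<notin> M \<union> {D, D+1}" unfolding M_def using D by auto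
  moreover have "M \<inter> {D, D+1} = {}" unfolding M_def by auto
  moreover have "finite M" unfolding M_def by simp
  ultimately have "card (insert 0 (M \<union> {D, D+1})) = Suc (card M + 2)"
    by (simp add: card_Un_disjoint)
  then show ?thesis using nbeq cM D by simp
qed

lemma Hk_deg_top:
  assumes D: "D \<ge> 3" and u: "u = D \<or> u = D + 1"
  shows "card (nb (Suc (D+1)) (Hk (D+1)) u) = D"
proof -
  define oo where "oo = (if u = D then D + 1 else D)"
  have nbeq: "nb (Suc (D+1)) (Hk (D+1)) u = insert oo {1..D-1}"
  proof (rule set_eqI)
    fix y
    have cases: "y = 0 \<or> (1 \<le> y \<and> y \<le> D - 1) \<or> y = D \<or> y = D + 1 \<or> y > D + 1" by linarith
    show "y \<in> nb (Suc (D+1)) (Hk (D+1)) u \<longleftrightarrow> y \<in> insert oo {1..D-1}"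
      using cases
    proof (elim disjE)
      assume y: "y = 0" then show ?thesis using Hk_0t[OF D u] u D unfolding nb_def oo_def by auto
    next
      assume y: "1 \<le> y \<and> y \<le> D - 1"
      then show ?thesis using Hk_mt[OF D, of y u] u D unfolding nb_def oo_def by auto
    next
      assume y: "y = D" then show ?thesis using Hk_tt[OF D] Hk_irr u unfolding nb_def oo_def by auto
    next
      assume y: "y = D + 1" then show ?thesis using Hk_tt[OF D] Hk_irr u unfolding nb_def oo_def by auto
    next
      assume y: "y > D + 1" then show ?thesis using Hk_big[OF y] u unfolding nb_def oo_def by auto
    qed
  qed
  have "oo \<notin> {1..D-1}" unfolding oo_def by auto
  then show ?thesis using nbeq D by simp
qed


definition circ :: "nat \<Rightarrow> nat \<Rightarrow> nat \<Rightarrow> nat \<Rightarrow> bool" where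
  "circ s h a b \<longleftrightarrow> h < (b + s - a) mod s \<and> (b + s - a) mod s < s - h"

lemma circ_irr: "\<not> circ s h a a" unfolding circ_def by simp

lemma circ_sym: assumes "a < s" "b < s" shows "circ s h a b = circ s h b a"
proof (cases "a = b")
  case True then show ?thesis by simp
next
  case False
  have "(b + s - a) mod s + (a + s - b) mod s = s"
  proof (cases "a < b")
    case True
    have "(b + s - a) mod s = b - a" using True assms by (simp add: mod_if)
    moreover have "(a + s - b) mod s = a + s - b" using True assms by simp
    ultimately show ?thesis using True assms by linarith
  next
    case False
    then have ba: "b < a" using \<open>a \<noteq> b\<close> by simp
    have "(a + s - b) mod s = a - b" using ba assms by (simp add: mod_if)
    moreover have "(b + s - a) mod s = b + s - a" using ba assms by simp
    ultimately show ?thesis using ba assms by linarith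
  qed
  then show ?thesis unfolding circ_def by linarith
qed

lemma circ_deg:
  assumes a: "a < s" and hs: "2 * h < s"
  shows "card {b. b < s \<and> circ s h a b} = s - 2 * h - 1"
proof -
  define \<phi> where "\<phi> b = (b + s - a) mod s" for b
  define \<psi> where "\<psi> d = (d + a) mod s" for d
  have s0: "s > 0" using a by simp
  have inv: "\<And>b. b < s \<Longrightarrow> \<psi> (\<phi> b) = b"
  proof -
    fix b assume b: "b < s"
    have "\<psi> (\<phi> b) = (b + s - a + a) mod s" unfolding \<psi>_def \<phi>_def by (simp add: mod_add_left_eq)
    also have "b + s - a + a = b + s" using a by simp
    finally show "\<psi> (\<phi> b) = b" using b by simp
  qed
  have inj: "inj_on \<phi> {b. b < s \<and> circ s h a b}"
    by (rule inj_on_inverseI[where g = \<psi>]) (use inv in auto)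
  have img: "\<phi> ` {b. b < s \<and> circ s h a b} = {h<..<s-h}"
  proof
    show "\<phi> ` {b. b < s \<and> circ s h a b} \<subseteq> {h<..<s-h}" unfolding \<phi>_def circ_def by auto
  next
    show "{h<..<s-h} \<subseteq> \<phi> ` {b. b < s \<and> circ s h a b}"
    proof
      fix d assume d: "d \<in> {h<..<s-h}"
      then have ds: "d < s" by (simp, linarith)
      have "\<phi> (\<psi> d) = d"
      proof -
        have "\<phi> (\<psi> d) = ((d + a) mod s + s - a) mod s" unfolding \<phi>_def \<psi>_def by simp
        also have "\<dots> = ((d + a) mod s + (s - a)) mod s" using a by (simp add: add_diff_assoc)
        also have "\<dots> = ((d + a) + (s - a)) mod s" by (rule mod_add_left_eq)
        also have "(d + a) + (s - a) = d + s" using a by simp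
        also have "(d + s) mod s = d" using ds by simp
        finally show ?thesis .
      qed
      moreover have "\<psi> d < s" unfolding \<psi>_def using s0 by simp
      moreover have "circ s h a (\<psi> d)" unfolding circ_def using \<open>\<phi> (\<psi> d) = d\<close> d unfolding \<phi>_def by simp
      ultimately show "d \<in> \<phi> ` {b. b < s \<and> circ s h a b}" by (metis (mono_tags, lifting) image_eqI mem_Collect_eq)
    qed
  qed
  have "card {b. b < s \<and> circ s h a b} = card {h<..<s-h}" using card_image[OF inj] img by simp
  then show ?thesis by simp
qed


locale cons =
  fixes D n :: nat
  assumes Dodd: "odd D" and D3: "D \<ge> 3" and nodd: "odd n" and nD: "n \<ge> 3 * D + 4"
begin

definition "BB = D + 1"
definition "mm0 = n - (D + 2)"
definition "LL = (mm0 div BB - 1) * BB"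
definition "ss = mm0 - LL"
definition "hh = (ss - 1 - D) div 2"

definition RR :: "nat \<Rightarrow> nat \<Rightarrow> bool" where
  "RR i j \<longleftrightarrow> i < mm0 \<and> j < mm0 \<and> i \<noteq> j \<and>
     ((i < LL \<and> j < LL \<and> i div BB = j div BB) \<or> (LL \<le> i \<and> LL \<le> j \<and> circ ss hh (i - LL) (j - LL)))"

definition G0 :: graph where
  "G0 u v \<longleftrightarrow> Hk (D+1) u v \<or> (D + 2 \<le> u \<and> D + 2 \<le> v \<and> RR (u - (D+2)) (v - (D+2)))"

lemma ar: "even BB" "even mm0" "mm0 \<ge> 2 * BB" "LL + BB \<le> mm0" "BB dvd LL"
   "ss \<ge> BB" "ss \<le> 2 * D" "even ss" "2 * hh = ss - 1 - D" "2 * hh < ss" "ss - 2 * hh - 1 = D"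
   "LL + ss = mm0"
proof -
  show eB: "even BB" unfolding BB_def using Dodd by simp
  show em: "even mm0" unfolding mm0_def using Dodd nodd nD by presburger
  show m2: "mm0 \<ge> 2 * BB" unfolding mm0_def BB_def using nD by simp
  have q2: "mm0 div BB \<ge> 2" using m2 unfolding BB_def
    by (metis div_le_mono nonzero_mult_div_cancel_right add_is_0 one_neq_zero)
  have dm: "mm0 = (mm0 div BB) * BB + mm0 mod BB" by simp
  have Lq: "LL = (mm0 div BB) * BB - BB" unfolding LL_def by (simp add: diff_mult_distrib)
  have "(mm0 div BB) * BB \<ge> BB" using q2 by (metis le_add2 mult_le_mono1 mult_2 le_trans mult.commute add_leD1 one_le_numeral)
  then show LB: "LL + BB \<le> mm0" using Lq dm by linarith
  show "BB dvd LL" unfolding LL_def by simp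
  have rB: "mm0 mod BB < BB" unfolding BB_def by simp
  have ss: "ss = BB + mm0 mod BB" unfolding ss_def using Lq dm \<open>(mm0 div BB) * BB \<ge> BB\<close> by linarith
  show "ss \<ge> BB" using ss by simp
  have er: "even (mm0 mod BB)" using em eB by (rule dvd_mod)
  have "mm0 mod BB \<noteq> D" using er Dodd by auto
  then have "mm0 mod BB \<le> D - 1" using rB unfolding BB_def by linarith
  then show ssD: "ss \<le> 2 * D" using ss D3 unfolding BB_def by linarith
  show es: "even ss" using ss er eB by simp
  have "ss \<ge> D + 1" using ss unfolding BB_def by simp
  then have "even (ss - 1 - D)" using es Dodd by presburger
  then show h2: "2 * hh = ss - 1 - D" unfolding hh_def by simp
  show "2 * hh < ss" using h2 \<open>ss \<ge> D + 1\<close> by linarith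
  show "ss - 2 * hh - 1 = D" using h2 \<open>ss \<ge> D + 1\<close> by linarith
  show "LL + ss = mm0" unfolding ss_def using LB by simp
qed

lemma RR_sym: "RR i j \<Longrightarrow> RR j i"
proof -
  assume r: "RR i j"
  then have "i - LL < ss \<and> j - LL < ss" if "LL \<le> i" "LL \<le> j" using ar(12) that unfolding RR_def by linarith
  then show "RR j i" using r circ_sym unfolding RR_def by metis
qed

lemma G0_graph: "is_graph n G0"
  unfolding is_graph_def
proof (intro allI impI)
  fix u v assume e: "G0 u v"
  show "u < n \<and> v < n \<and> u \<noteq> v \<and> G0 v u"
  proof (cases "Hk (D+1) u v")
    case True
    then have "u < Suc (D+1) \<and> v < Suc (D+1) \<and> u \<noteq> v \<and> Hk (D+1) v u"
      using Hk_graph[of D] unfolding is_graph_def by blast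
    then show ?thesis using nD unfolding G0_def by auto
  next
    case False
    then have r: "D + 2 \<le> u" "D + 2 \<le> v" "RR (u - (D+2)) (v - (D+2))" using e unfolding G0_def by auto
    then have "u - (D+2) < mm0" "v - (D+2) < mm0" "u - (D+2) \<noteq> v - (D+2)" unfolding RR_def by auto
    then have "u < n" "v < n" "u \<noteq> v" using r(1,2) unfolding mm0_def by auto
    moreover have "G0 v u" using RR_sym[OF r(3)] r(1,2) unfolding G0_def by simp
    ultimately show ?thesis by simp
  qed
qed

lemma nb_low: "u \<le> D + 1 \<Longrightarrow> nb n G0 u = nb (Suc (D+1)) (Hk (D+1)) u"
proof -
  assume u: "u \<le> D + 1"
  have "\<And>v. G0 u v \<longleftrightarrow> Hk (D+1) u v" using u unfolding G0_def by auto
  moreover have "\<And>v. Hk (D+1) u v \<Longrightarrow> v < Suc (D+1)" unfolding Hk_def by auto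
  ultimately show ?thesis unfolding nb_def
  proof -
    assume h1: "\<And>v. G0 u v \<longleftrightarrow> Hk (D+1) u v" and h2: "\<And>v. Hk (D+1) u v \<Longrightarrow> v < Suc (D+1)"
    show "{v. v < n \<and> G0 u v} = {v. v < Suc (D + 1) \<and> Hk (D + 1) u v}"
    proof (rule set_eqI)
      fix v
      have "Suc (D+1) \<le> n" using nD by simp
      then show "v \<in> {v. v < n \<and> G0 u v} \<longleftrightarrow> v \<in> {v. v < Suc (D + 1) \<and> Hk (D + 1) u v}"
        using h1[of v] h2[of v] by auto
    qed
  qed
qed

lemma RR_deg: "i < mm0 \<Longrightarrow> card {j. RR i j} = D"
proof -
  assume i: "i < mm0"
  show ?thesis
  proof (cases "i < LL")
    case True
    define b where "b = i div BB"
    have bB: "b * BB + BB \<le> LL"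
    proof -
      obtain c where c0: "LL = BB * c" using ar(5) unfolding dvd_def by blast
      then have c: "LL = c * BB" by simp
      have "b < c"
      proof (rule ccontr)
        assume "\<not> b < c"
        then have "c * BB \<le> b * BB" by (intro mult_le_mono1) simp
        moreover have "b * BB \<le> i" unfolding b_def by simp
        ultimately show False using True c by linarith
      qed
      then have "Suc b * BB \<le> c * BB" by (intro mult_le_mono1) simp
      then show ?thesis using c by simp
    qed
    have "{j. RR i j} = {b * BB..<b * BB + BB} - {i}"
    proof (rule set_eqI)
      fix j
      have B0: "0 < BB" unfolding BB_def by simp
      have blk: "j div BB = b \<longleftrightarrow> b * BB \<le> j \<and> j < b * BB + BB"
      proof
        assume "j div BB = b"
        then show "b * BB \<le> j \<and> j < b * BB + BB"
          using div_times_less_eq_dividend[of j BB] dividend_less_div_times[OF B0, of j] by auto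
      next
        assume "b * BB \<le> j \<and> j < b * BB + BB"
        then show "j div BB = b" by (intro div_nat_eqI) (auto simp: mult.commute)
      qed
      show "j \<in> {j. RR i j} \<longleftrightarrow> j \<in> {b * BB..<b * BB + BB} - {i}"
        using True i bB blk ar(4) unfolding RR_def b_def by auto
    qed
    moreover have "i \<in> {b * BB..<b * BB + BB}"
      unfolding b_def using div_times_less_eq_dividend[of i BB] dividend_less_div_times[of BB i]
      unfolding BB_def by simp
    ultimately show ?thesis unfolding BB_def by simp
  next
    case False
    have "{j. RR i j} = (\<lambda>b. b + LL) ` {b. b < ss \<and> circ ss hh (i - LL) b}"
    proof (rule set_eqI)
      fix j
      show "j \<in> {j. RR i j} \<longleftrightarrow> j \<in> (\<lambda>b. b + LL) ` {b. b < ss \<and> circ ss hh (i - LL) b}"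
      proof
        assume "j \<in> {j. RR i j}"
        then have r: "RR i j" by simp
        then have j: "LL \<le> j" "j < mm0" "circ ss hh (i - LL) (j - LL)" using False unfolding RR_def by auto
        then have "j - LL < ss" using ar(12) by linarith
        then show "j \<in> (\<lambda>b. b + LL) ` {b. b < ss \<and> circ ss hh (i - LL) b}"
          using j by (intro image_eqI[of _ _ "j - LL"]) auto
      next
        assume "j \<in> (\<lambda>b. b + LL) ` {b. b < ss \<and> circ ss hh (i - LL) b}"
        then obtain b where b: "b < ss" "circ ss hh (i - LL) b" "j = b + LL" by auto
        have "j \<noteq> i" using b circ_irr[of ss hh "i - LL"] False by auto
        then show "j \<in> {j. RR i j}" using b False i ar(12) unfolding RR_def by auto
      qed
    qed
    moreover have "card {b. b < ss \<and> circ ss hh (i - LL) b} = D"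
      using circ_deg[of "i - LL" ss hh] i False ar(10,11,12) by simp
    ultimately show ?thesis by (simp add: card_image inj_on_def)
  qed
qed

end

lemma div_block: "0 < (B::nat) \<Longrightarrow> j div B = b \<longleftrightarrow> b * B \<le> j \<and> j < b * B + B"
proof
  assume B0: "0 < B" and "j div B = b"
  then show "b * B \<le> j \<and> j < b * B + B"
    using div_times_less_eq_dividend[of j B] dividend_less_div_times[OF B0, of j] by auto
next
  assume "b * B \<le> j \<and> j < b * B + B"
  then show "j div B = b" by (intro div_nat_eqI) (auto simp: mult.commute)
qed

context cons begin

lemma B0: "0 < BB" unfolding BB_def by simp

lemma blk_le: "i < LL \<Longrightarrow> (i div BB) * BB + BB \<le> LL"
proof -
  assume i: "i < LL"
  obtain c where c0: "LL = BB * c" using ar(5) unfolding dvd_def by blast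
  then have c: "LL = c * BB" by simp
  have "i div BB < c"
  proof (rule ccontr)
    assume "\<not> i div BB < c"
    then have "c * BB \<le> (i div BB) * BB" by (intro mult_le_mono1) simp
    moreover have "(i div BB) * BB \<le> i" by simp
    ultimately show False using i c by linarith
  qed
  then have "Suc (i div BB) * BB \<le> c * BB" by (intro mult_le_mono1) simp
  then show ?thesis using c by simp
qed

lemma nb_high: "D + 2 \<le> u \<Longrightarrow> nb n G0 u = (\<lambda>j. j + (D+2)) ` {j. RR (u - (D+2)) j}"
proof (rule set_eqI)
  fix v assume u: "D + 2 \<le> u"
  have nh: "\<not> Hk (D+1) u v" using Hk_big[of D u v] u by simp
  show "v \<in> nb n G0 u \<longleftrightarrow> v \<in> (\<lambda>j. j + (D+2)) ` {j. RR (u - (D+2)) j}"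
  proof
    assume "v \<in> nb n G0 u"
    then have "D + 2 \<le> v" "RR (u - (D+2)) (v - (D+2))" using nh unfolding nb_def G0_def by auto
    then show "v \<in> (\<lambda>j. j + (D+2)) ` {j. RR (u - (D+2)) j}" by (intro image_eqI[of _ _ "v - (D+2)"]) auto
  next
    assume "v \<in> (\<lambda>j. j + (D+2)) ` {j. RR (u - (D+2)) j}"
    then obtain j where j: "RR (u - (D+2)) j" "v = j + (D+2)" by auto
    then have "j < mm0" unfolding RR_def by simp
    then have "v < n" using j(2) unfolding mm0_def by simp
    then show "v \<in> nb n G0 u" using j u unfolding nb_def G0_def by simp
  qed
qed

lemma deg_G0: "u < n \<Longrightarrow> deg n G0 u = (if u = 0 then D - 1 else D)"
proof -
  assume un: "u < n"
  have cases: "u = 0 \<or> (1 \<le> u \<and> u \<le> D - 1) \<or> u = D \<or> u = D + 1 \<or> u \<ge> D + 2" by linarith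
  then show ?thesis
  proof (elim disjE)
    assume "u = 0" then show ?thesis using nb_low[of 0] nb_Hk0[OF D3] deg_nb by simp
  next
    assume u: "1 \<le> u \<and> u \<le> D - 1"
    then have ul: "u \<le> D + 1" by linarith
    have "card (nb n G0 u) = D" using nb_low[OF ul] Hk_deg_mid[OF D3 Dodd, of u] u by simp
    then show ?thesis using deg_nb u by simp
  next
    assume u: "u = D" then show ?thesis using nb_low[of u] Hk_deg_top[OF D3, of u] deg_nb D3 by simp
  next
    assume u: "u = D + 1" then show ?thesis using nb_low[of u] Hk_deg_top[OF D3, of u] deg_nb by simp
  next
    assume u: "u \<ge> D + 2"
    have "u - (D+2) < mm0" using un u unfolding mm0_def by simp
    then have "card {j. RR (u - (D+2)) j} = D" by (rule RR_deg)
    moreover have inj: "inj_on (\<lambda>j. j + (D+2)) {j. RR (u - (D+2)) j}" by (simp add: inj_on_def)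
    ultimately have "card (nb n G0 u) = D" unfolding nb_high[OF u] using card_image[OF inj] by simp
    then show ?thesis using deg_nb u by simp
  qed
qed

lemma uniq0: "v < n \<and> deg n G0 v = D - 1 \<Longrightarrow> v = 0"
proof (rule ccontr)
  assume h: "v < n \<and> deg n G0 v = D - 1" and v: "v \<noteq> 0"
  then have "deg n G0 v = D" using deg_G0[of v] by simp
  then show False using h D3 by simp
qed

lemma nr: "nearly_regular n D G0"
  unfolding nearly_regular_def
proof
  show "\<forall>v<n. deg n G0 v = D \<or> deg n G0 v = D - 1" using deg_G0 by simp
  show "\<exists>!v. v < n \<and> deg n G0 v = D - 1"
  proof (rule ex1I[of _ 0])
    show "0 < n \<and> deg n G0 0 = D - 1" using nD deg_G0[of 0] by simp
    show "\<And>v. v < n \<and> deg n G0 v = D - 1 \<Longrightarrow> v = 0" by (rule uniq0)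
  qed
qed

lemma closed_low: "x \<le> D + 1 \<Longrightarrow> G0 x y \<Longrightarrow> y \<le> D + 1"
  unfolding G0_def Hk_def by auto

lemma comp_low: "u \<le> D + 1 \<Longrightarrow> comp G0 u \<subseteq> {..D+1}"
  using comp_sub_closed[of u "{..D+1}" G0] closed_low by auto

lemma comp0: "comp G0 0 = {..D+1}"
proof
  show "comp G0 0 \<subseteq> {..D+1}" using comp_low by simp
  show "{..D+1} \<subseteq> comp G0 0"
  proof
    fix y assume y: "y \<in> {..D+1}"
    have m1: "\<And>y. 1 \<le> y \<Longrightarrow> y \<le> D - 1 \<Longrightarrow> y \<in> comp G0 0"
      using Hk_0m[OF D3] comp_closed[OF comp_self[of 0 G0]] unfolding G0_def by blast
    have cases: "y = 0 \<or> (1 \<le> y \<and> y \<le> D - 1) \<or> y = D \<or> y = D + 1" using y by auto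
    then show "y \<in> comp G0 0"
    proof (elim disjE)
      assume "y = 0" then show ?thesis by (simp add: comp_self)
    next
      assume "1 \<le> y \<and> y \<le> D - 1" then show ?thesis using m1 by blast
    next
      assume yy: "y = D"
      have "1 \<in> comp G0 0" using m1[of 1] D3 by simp
      moreover have "G0 1 y" using Hk_mt[OF D3, of 1 y] yy D3 unfolding G0_def by simp
      ultimately show ?thesis using comp_closed by blast
    next
      assume yy: "y = D + 1"
      have "1 \<in> comp G0 0" using m1[of 1] D3 by simp
      moreover have "G0 1 y" using Hk_mt[OF D3, of 1 y] yy D3 unfolding G0_def by simp
      ultimately show ?thesis using comp_closed by blast
    qed
  qed
qed

lemma comps: "u < n \<Longrightarrow> card (comp G0 u) \<le> 2 * D"
proof -
  assume un: "u < n"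
  show ?thesis
  proof (cases "u \<le> D + 1")
    case True
    then have "card (comp G0 u) \<le> card {..D+1}" using comp_low by (intro card_mono) auto
    then show ?thesis using D3 by simp
  next
    case False
    define i where "i = u - (D+2)"
    have ui: "u = i + (D+2)" using False i_def by simp
    have im: "i < mm0" using un ui unfolding mm0_def by simp
    show ?thesis
    proof (cases "i < LL")
      case True
      define b where "b = i div BB"
      define S where "S = {D+2 + b*BB ..< D+2 + b*BB + BB}"
      have bl: "b * BB + BB \<le> LL" using blk_le[OF True] b_def by simp
      have "comp G0 u \<subseteq> S"
      proof (rule comp_sub_closed)
        show "u \<in> S" unfolding S_def ui b_def
          using div_block[OF B0, of i "i div BB"] by simp
        fix x y assume x: "x \<in> S" and e: "G0 x y"
        have xh: "D + 2 \<le> x" using x unfolding S_def by simp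
        then have nh: "\<not> Hk (D+1) x y" using Hk_big[of D x y] by simp
        then have r: "D + 2 \<le> y" "RR (x - (D+2)) (y - (D+2))" using e unfolding G0_def by auto
        have x': "x - (D+2) div BB = b \<or> True" by simp
        have xd: "(x - (D+2)) div BB = b" using x unfolding S_def using div_block[OF B0] by auto
        have xl: "x - (D+2) < LL" using x bl unfolding S_def by auto
        then have "y - (D+2) < LL \<and> (y - (D+2)) div BB = b" using r(2) xd unfolding RR_def by auto
        then have "b * BB \<le> y - (D+2) \<and> y - (D+2) < b * BB + BB" using div_block[OF B0, of "y - (D+2)" b] by simp
        then show "y \<in> S" using r(1) unfolding S_def atLeastLessThan_iff by (intro conjI; linarith)
      qed
      then have "card (comp G0 u) \<le> card S" by (intro card_mono) (auto simp: S_def)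
      then show ?thesis unfolding S_def BB_def using D3 by simp
    next
      case False
      define S where "S = {D+2 + LL ..< n}"
      have "comp G0 u \<subseteq> S"
      proof (rule comp_sub_closed)
        show "u \<in> S" unfolding S_def using ui False un by simp
        fix x y assume x: "x \<in> S" and e: "G0 x y"
        have xh: "D + 2 \<le> x" using x unfolding S_def by simp
        then have nh: "\<not> Hk (D+1) x y" using Hk_big[of D x y] by simp
        then have r: "D + 2 \<le> y" "RR (x - (D+2)) (y - (D+2))" using e unfolding G0_def by auto
        have "LL \<le> x - (D+2)" using x unfolding S_def by auto
        then have "LL \<le> y - (D+2) \<and> y - (D+2) < mm0" using r(2) unfolding RR_def by auto
        then show "y \<in> S" using r(1) unfolding S_def mm0_def by auto
      qed
      then have "card (comp G0 u) \<le> card S" by (intro card_mono) (auto simp: S_def)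
      moreover have "card S = ss" unfolding S_def using ar(12) unfolding mm0_def by simp
      ultimately show ?thesis using ar(7) by simp
    qed
  qed
qed

lemma G0V: "G0 \<in> Vfam (D+1) n"
proof -
  have "comp_iso G0 (comp G0 0) (Hk (D+1)) (Suc (D+1))"
    unfolding comp_iso_def comp0
  proof (intro exI[of _ id] conjI)
    have "{..D + 1} = {0..<Suc (D + 1)}" by auto
    then show "bij_betw id {..D + 1} {0..<Suc (D + 1)}" by (simp add: bij_betw_def)
    show "\<forall>u\<in>{..D + 1}. \<forall>v\<in>{..D + 1}. G0 u v = Hk (D + 1) (id u) (id v)"
      unfolding G0_def by auto
  qed
  moreover have "0 < n" using nD by simp
  ultimately show ?thesis unfolding Vfam_def using G0_graph nr comps D3
    by (auto intro!: exI[of _ 0])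
qed

lemma wv0: "wv D n G0 = 0"
  unfolding wv_def
proof (rule the_equality)
  show "0 < n \<and> deg n G0 0 = D - 1" using nD deg_G0[of 0] by simp
  show "\<And>v. v < n \<and> deg n G0 v = D - 1 \<Longrightarrow> v = 0" by (rule uniq0)
qed

lemma G0c: "P n G0 3 (wv D n G0) (wv D n G0) = (D-1)*(D-3)"
  "P n G0 4 (wv D n G0) (wv D n G0) = ng2.C4 D"
proof -
  have G: "G0 \<in> GDn D n" using Vfam_props(1)[OF G0V Dodd D3] .
  interpret z: ng2 n G0 D "wv D n G0" by (rule GDn_ng2[OF G Dodd D3])
  have NN: "z.NN = {1..D-1}" using z.NN_def wv0 nb_low[of 0] nb_Hk0[OF D3] by simp
  have CC: "z.CC = {..D+1}" using z.CC_def wv0 comp0 by simp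
  have XX: "z.XX = {D, D+1}" using z.XX_def CC NN wv0 D3 by auto
  have s: "card z.XX = 2" unfolding XX by simp
  have full: "\<And>x. x \<in> z.XX \<Longrightarrow> z.NN \<subseteq> nb n G0 x"
  proof
    fix x y assume x: "x \<in> z.XX" and y: "y \<in> z.NN"
    have "x = D \<or> x = D + 1" using x XX by simp
    moreover have "1 \<le> y" "y \<le> D - 1" using y NN by auto
    ultimately have "Hk (D+1) x y" using Hk_mt[OF D3, of y x] by blast
    moreover have "y < n" using \<open>y \<le> D - 1\<close> nD by simp
    ultimately show "y \<in> nb n G0 x" unfolding nb_def G0_def by simp
  qed
  show "P n G0 3 (wv D n G0) (wv D n G0) = (D-1)*(D-3)" using z.rev_s2(1)[OF s full] .
  show "P n G0 4 (wv D n G0) (wv D n G0) = ng2.C4 D" using z.rev_s2(2)[OF s full] .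
qed

end

theorem lemma3p3:
  fixes \<Delta> n :: nat
  assumes "odd \<Delta>" "\<Delta> \<ge> 3" "odd n" "n \<ge> 3 * \<Delta> + 4"
  shows "EX_inf n (GDn \<Delta> n) = Vfam (\<Delta> + 1) n"
proof -
  interpret c: cons \<Delta> n using assms by unfold_locales
  interpret s: stp \<Delta> n c.G0 using assms(1,2) c.G0V c.G0c by unfold_locales
  show ?thesis by (rule s.final)
qed


end
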